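(* Let $f:E_A^{\mathbb N}\to\mathbb R$ be summable, strongly regular and Hölder-type with $P(f)=0$, and let $s=x+iy$ with $x\in\Gamma$. Then the operator $\mathcal L_s$ acting on $C^{0,\alpha}$ has at most finitely many eigenvalues of modulus $e^{P(x)}$, and each of them has algebraic multiplicity one.
   Context: $E$ countable, $A:E\times E\to\{0,1\}$, $E_A^{\mathbb N}$ the admissible one-sided sequences, $E_A^n$ admissible words of length $n$; the subshift is finitely irreducible (a finite set $\Omega$ of words exists such that for all $e,e'\in E$ some $\omega\in\Omega$ makes $e\omega e'$ admissible). $\sigma$ shift, $S_nf=\sum_{j<n}f\circ\sigma^j$, $[\omega]$ cylinders, $|\rho\wedge\rho'|$ common-prefix length. Fix $\alpha>0$; $V_\alpha(g)=\sup_{n\ge1}\sup\{|g(\rho)-g(\rho')|e^{\alpha(n-1)}:|\rho\wedge\rho'|\ge n\}$; Hölder-type means $V_\alpha<\infty$; $C^{0,\alpha}$ is the Banach space of bounded complex $g$ with $V_\alpha(g)<\infty$, norm $\|g\|_\infty+V_\alpha(g)$. Real $g$ summable: $\sum_e\exp(\sup_{[e]}g)<\infty$. $P(g)=\lim_n\frac1n\log\sum_{\omega\in E_A^n}\exp(\sup_{[\omega]}S_ng)$, $\Gamma=\{x:xf\text{ summable}\}$, $P(x)=P(xf)$. Strongly regular: $P(x)=0$ for some $x>0$ and $0<P(x)<\infty$ for some $x>0$. $\mathcal L_sg(\rho)=\sum_{e:A_{e\rho_1}=1}\exp(sf(e\rho))g(e\rho)$. *)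

theory Defs
  imports "HOL-Analysis.Analysis"
begin

text \<open>Symbolic dynamics over a countable alphabet, given by the type 'e::countable.
  Indices of sequences start at 0 (so the paper's rho_1 is rho 0).\<close>

definition admissible_seqs :: "('e \<Rightarrow> 'e \<Rightarrow> bool) \<Rightarrow> (nat \<Rightarrow> 'e) set" where
  "admissible_seqs A = {\<rho>. \<forall>n. A (\<rho> n) (\<rho> (Suc n))}"

definition admissible_word :: "('e \<Rightarrow> 'e \<Rightarrow> bool) \<Rightarrow> 'e list \<Rightarrow> bool" where
  "admissible_word A w \<longleftrightarrow> (\<forall>i. Suc i < length w \<longrightarrow> A (w ! i) (w ! Suc i))"

definition adm_words :: "('e \<Rightarrow> 'e \<Rightarrow> bool) \<Rightarrow> nat \<Rightarrow> 'e list set" where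
  "adm_words A n = {w. length w = n \<and> admissible_word A w}"

definition finitely_irreducible :: "('e \<Rightarrow> 'e \<Rightarrow> bool) \<Rightarrow> bool" where
  "finitely_irreducible A \<longleftrightarrow>
     (\<exists>\<Omega>. finite \<Omega> \<and> (\<forall>w\<in>\<Omega>. admissible_word A w) \<and>
       (\<forall>e e'. \<exists>w\<in>\<Omega>. admissible_word A (e # w @ [e'])))"

definition cylinder :: "('e \<Rightarrow> 'e \<Rightarrow> bool) \<Rightarrow> 'e list \<Rightarrow> (nat \<Rightarrow> 'e) set" where
  "cylinder A w = {\<rho>\<in>admissible_seqs A. \<forall>i<length w. \<rho> i = w ! i}"

definition shift :: "(nat \<Rightarrow> 'e) \<Rightarrow> (nat \<Rightarrow> 'e)" where
  "shift \<rho> = (\<lambda>i. \<rho> (Suc i))"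

definition birkhoff_sum :: "nat \<Rightarrow> ((nat \<Rightarrow> 'e) \<Rightarrow> real) \<Rightarrow> (nat \<Rightarrow> 'e) \<Rightarrow> real" where
  "birkhoff_sum n g \<rho> = (\<Sum>j<n. g ((shift ^^ j) \<rho>))"

definition holder_type :: "('e \<Rightarrow> 'e \<Rightarrow> bool) \<Rightarrow> real \<Rightarrow> ((nat \<Rightarrow> 'e) \<Rightarrow> 'a::real_normed_vector) \<Rightarrow> bool" where
  "holder_type A \<alpha> g \<longleftrightarrow>
     (\<exists>C. \<forall>n\<ge>1. \<forall>\<rho>\<in>admissible_seqs A. \<forall>\<rho>'\<in>admissible_seqs A.
        (\<forall>i<n. \<rho> i = \<rho>' i) \<longrightarrow> norm (g \<rho> - g \<rho>') * exp (\<alpha> * (real n - 1)) \<le> C)"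

text \<open>Summability: sum over e of exp(sup over [e] of g) is finite (empty cylinders
  contribute nothing; an unbounded-above cylinder would contribute +infinity).\<close>
definition summable_pot :: "('e \<Rightarrow> 'e \<Rightarrow> bool) \<Rightarrow> ((nat \<Rightarrow> 'e) \<Rightarrow> real) \<Rightarrow> bool" where
  "summable_pot A g \<longleftrightarrow>
     (\<forall>e. bdd_above (g ` cylinder A [e])) \<and>
     (\<lambda>e. exp (Sup (g ` cylinder A [e]))) summable_on {e. cylinder A [e] \<noteq> {}}"

definition pressure_finite_at :: "('e \<Rightarrow> 'e \<Rightarrow> bool) \<Rightarrow> ((nat \<Rightarrow> 'e) \<Rightarrow> real) \<Rightarrow> nat \<Rightarrow> bool" where
  "pressure_finite_at A g n \<longleftrightarrow>
     (\<forall>w\<in>adm_words A n. bdd_above (birkhoff_sum n g ` cylinder A w)) \<and>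
     (\<lambda>w. exp (Sup (birkhoff_sum n g ` cylinder A w))) summable_on
        {w\<in>adm_words A n. cylinder A w \<noteq> {}}"

definition pressure :: "('e \<Rightarrow> 'e \<Rightarrow> bool) \<Rightarrow> ((nat \<Rightarrow> 'e) \<Rightarrow> real) \<Rightarrow> ereal" where
  "pressure A g =
     (if \<forall>n\<ge>1. pressure_finite_at A g n then
        lim (\<lambda>n. ereal (ln (\<Sum>\<^sub>\<infinity>w\<in>{w\<in>adm_words A n. cylinder A w \<noteq> {}}.
                     exp (Sup (birkhoff_sum n g ` cylinder A w))) / real n))
      else \<infinity>)"

definition Gamma_set :: "('e \<Rightarrow> 'e \<Rightarrow> bool) \<Rightarrow> ((nat \<Rightarrow> 'e) \<Rightarrow> real) \<Rightarrow> real set" where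
  "Gamma_set A f = {x. summable_pot A (\<lambda>\<rho>. x * f \<rho>)}"

definition strongly_regular :: "('e \<Rightarrow> 'e \<Rightarrow> bool) \<Rightarrow> ((nat \<Rightarrow> 'e) \<Rightarrow> real) \<Rightarrow> bool" where
  "strongly_regular A f \<longleftrightarrow>
     (\<exists>x>0. pressure A (\<lambda>\<rho>. x * f \<rho>) = 0) \<and>
     (\<exists>x>0. 0 < pressure A (\<lambda>\<rho>. x * f \<rho>) \<and> pressure A (\<lambda>\<rho>. x * f \<rho>) < \<infinity>)"

text \<open>The Banach space C^{0,alpha}: bounded complex functions on the admissible
  sequences with finite V_alpha.  Functions are represented extensionally,
  i.e. they vanish outside the shift space.\<close>
definition holder_space :: "('e \<Rightarrow> 'e \<Rightarrow> bool) \<Rightarrow> real \<Rightarrow> ((nat \<Rightarrow> 'e) \<Rightarrow> complex) set" where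
  "holder_space A \<alpha> =
     {g. (\<forall>\<rho>. \<rho> \<notin> admissible_seqs A \<longrightarrow> g \<rho> = 0) \<and>
         bounded (g ` admissible_seqs A) \<and> holder_type A \<alpha> g}"

definition seq_cons :: "'e \<Rightarrow> (nat \<Rightarrow> 'e) \<Rightarrow> (nat \<Rightarrow> 'e)" where
  "seq_cons e \<rho> = case_nat e \<rho>"

definition transfer_op :: "('e \<Rightarrow> 'e \<Rightarrow> bool) \<Rightarrow> ((nat \<Rightarrow> 'e) \<Rightarrow> real) \<Rightarrow> complex
      \<Rightarrow> ((nat \<Rightarrow> 'e) \<Rightarrow> complex) \<Rightarrow> ((nat \<Rightarrow> 'e) \<Rightarrow> complex)" where
  "transfer_op A f s g \<rho> =
     (if \<rho> \<in> admissible_seqs A then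
        (\<Sum>\<^sub>\<infinity>e\<in>{e. A e (\<rho> 0)}. exp (s * complex_of_real (f (seq_cons e \<rho>))) * g (seq_cons e \<rho>))
      else 0)"

definition op_minus_scalar :: "('e \<Rightarrow> 'e \<Rightarrow> bool) \<Rightarrow> (((nat \<Rightarrow> 'e) \<Rightarrow> complex) \<Rightarrow> ((nat \<Rightarrow> 'e) \<Rightarrow> complex))
      \<Rightarrow> complex \<Rightarrow> ((nat \<Rightarrow> 'e) \<Rightarrow> complex) \<Rightarrow> ((nat \<Rightarrow> 'e) \<Rightarrow> complex)" where
  "op_minus_scalar A L \<mu> g = (\<lambda>\<rho>. if \<rho> \<in> admissible_seqs A then L g \<rho> - \<mu> * g \<rho> else 0)"

definition is_eigenvalue_on :: "((nat \<Rightarrow> 'e) \<Rightarrow> complex) set \<Rightarrow> ('e \<Rightarrow> 'e \<Rightarrow> bool)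
      \<Rightarrow> (((nat \<Rightarrow> 'e) \<Rightarrow> complex) \<Rightarrow> ((nat \<Rightarrow> 'e) \<Rightarrow> complex)) \<Rightarrow> complex \<Rightarrow> bool" where
  "is_eigenvalue_on V A L \<mu> \<longleftrightarrow> (\<exists>g\<in>V. g \<noteq> (\<lambda>_. 0) \<and> op_minus_scalar A L \<mu> g = (\<lambda>_. 0))"

definition gen_eigenspace :: "((nat \<Rightarrow> 'e) \<Rightarrow> complex) set \<Rightarrow> ('e \<Rightarrow> 'e \<Rightarrow> bool)
      \<Rightarrow> (((nat \<Rightarrow> 'e) \<Rightarrow> complex) \<Rightarrow> ((nat \<Rightarrow> 'e) \<Rightarrow> complex)) \<Rightarrow> complex \<Rightarrow> ((nat \<Rightarrow> 'e) \<Rightarrow> complex) set" where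
  "gen_eigenspace V A L \<mu> = {g\<in>V. \<exists>k. (op_minus_scalar A L \<mu> ^^ k) g = (\<lambda>_. 0)}"

definition alg_mult_one :: "((nat \<Rightarrow> 'e) \<Rightarrow> complex) set \<Rightarrow> ('e \<Rightarrow> 'e \<Rightarrow> bool)
      \<Rightarrow> (((nat \<Rightarrow> 'e) \<Rightarrow> complex) \<Rightarrow> ((nat \<Rightarrow> 'e) \<Rightarrow> complex)) \<Rightarrow> complex \<Rightarrow> bool" where
  "alg_mult_one V A L \<mu> \<longleftrightarrow>
     (\<exists>g0\<in>gen_eigenspace V A L \<mu>. g0 \<noteq> (\<lambda>_. 0) \<and>
        (\<forall>g\<in>gen_eigenspace V A L \<mu>. \<exists>c::complex. g = (\<lambda>\<rho>. c * g0 \<rho>)))"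

end

theory Submission
  imports Defs
begin

definition pre :: "'e list \<Rightarrow> (nat \<Rightarrow> 'e) \<Rightarrow> (nat \<Rightarrow> 'e)" where
  "pre w \<rho> = (\<lambda>i. if i < length w then w ! i else \<rho> (i - length w))"

lemma shift_funpow: "(shift ^^ j) \<rho> = (\<lambda>i. \<rho> (i + j))"
  by (induction j arbitrary: \<rho>) (auto simp: shift_def funpow_Suc_right)

lemma pre_Nil[simp]: "pre [] \<rho> = \<rho>"
  by (simp add: pre_def)

lemma seq_cons_0[simp]: "seq_cons e \<rho> 0 = e"
  by (simp add: seq_cons_def)

lemma seq_cons_Suc[simp]: "seq_cons e \<rho> (Suc i) = \<rho> i"
  by (simp add: seq_cons_def)

lemma shift_seq_cons[simp]: "shift (seq_cons e \<rho>) = \<rho>"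
  by (simp add: shift_def seq_cons_def)

lemma pre_Cons: "pre (e # w) \<rho> = seq_cons e (pre w \<rho>)"
  by (rule ext) (auto simp: pre_def seq_cons_def split: nat.split)

lemma pre_append: "pre (u @ v) \<rho> = pre u (pre v \<rho>)"
  by (rule ext) (auto simp: pre_def nth_append)

lemma pre_single: "pre [e] \<rho> = seq_cons e \<rho>"
  by (simp add: pre_Cons)

lemma pre_snoc: "pre (w @ [e]) \<rho> = pre w (seq_cons e \<rho>)"
  by (simp add: pre_append pre_single)

lemma shift_pre: "(shift ^^ length w) (pre w \<rho>) = \<rho>"
  by (rule ext) (simp add: shift_funpow pre_def)

lemma pre_nth_less: "i < length w \<Longrightarrow> pre w \<rho> i = w ! i"
  by (simp add: pre_def)

lemma admissible_word_Nil[simp]: "admissible_word A []"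
  by (simp add: admissible_word_def)

lemma admissible_word_single[simp]: "admissible_word A [e]"
  by (simp add: admissible_word_def)

lemma admissible_word_Cons:
  "admissible_word A (e # ws) \<longleftrightarrow> (ws \<noteq> [] \<longrightarrow> A e (ws ! 0)) \<and> admissible_word A ws"
proof
  assume h: "admissible_word A (e # ws)"
  have "A e (ws ! 0)" if "ws \<noteq> []"
    using h that unfolding admissible_word_def by (metis length_Cons length_greater_0_conv nth_Cons_0 nth_Cons_Suc Suc_less_eq)
  moreover have "admissible_word A ws"
    using h unfolding admissible_word_def by (metis length_Cons nth_Cons_Suc Suc_less_eq)
  ultimately show "(ws \<noteq> [] \<longrightarrow> A e (ws ! 0)) \<and> admissible_word A ws" by blast
next
  assume h: "(ws \<noteq> [] \<longrightarrow> A e (ws ! 0)) \<and> admissible_word A ws"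
  show "admissible_word A (e # ws)"
    unfolding admissible_word_def
  proof (intro allI impI)
    fix i assume "Suc i < length (e # ws)"
    then show "A ((e # ws) ! i) ((e # ws) ! Suc i)"
      using h unfolding admissible_word_def by (cases i) auto
  qed
qed

lemma admissible_word_append_link:
  assumes u: "admissible_word A u" and ne: "u \<noteq> []" and v: "admissible_word A (last u # v)"
  shows "admissible_word A (u @ v)"
  unfolding admissible_word_def
proof (intro allI impI)
  fix i assume i: "Suc i < length (u @ v)"
  show "A ((u @ v) ! i) ((u @ v) ! Suc i)"
  proof (cases "Suc i < length u")
    case True
    then show ?thesis using u unfolding admissible_word_def by (simp add: nth_append)
  next
    case False
    define k where "k = i - (length u - 1)"
    have lu: "length u \<ge> 1" using ne by (cases u) auto
    have ik: "i = k + (length u - 1)" using False lu unfolding k_def by auto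
    have a1: "(u @ v) ! i = (last u # v) ! k"
    proof (cases k)
      case 0
      then have "i = length u - 1" using ik by simp
      then show ?thesis using 0 ne by (simp add: nth_append last_conv_nth)
    next
      case (Suc k')
      have i2: "i = k' + length u" using ik Suc lu by simp
      show ?thesis unfolding Suc i2 by (simp add: nth_append)
    qed
    have si: "Suc i = k + length u" using ik lu by simp
    have a2: "(u @ v) ! Suc i = (last u # v) ! Suc k"
      unfolding si by (simp add: nth_append)
    have "Suc k < length (last u # v)" using i ik lu by simp
    then show ?thesis using v unfolding admissible_word_def a1 a2 by blast
  qed
qed

lemma adm_seq_cons: "seq_cons e \<rho> \<in> admissible_seqs A \<longleftrightarrow> A e (\<rho> 0) \<and> \<rho> \<in> admissible_seqs A"
  unfolding admissible_seqs_def
proof safe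
  fix n assume "\<forall>n. A (seq_cons e \<rho> n) (seq_cons e \<rho> (Suc n))"
  then show "A (\<rho> n) (\<rho> (Suc n))" by (metis seq_cons_Suc)
next
  assume "\<forall>n. A (seq_cons e \<rho> n) (seq_cons e \<rho> (Suc n))"
  then show "A e (\<rho> 0)" by (metis seq_cons_0 seq_cons_Suc)
next
  fix n assume "A e (\<rho> 0)" "\<forall>n. A (\<rho> n) (\<rho> (Suc n))"
  then show "A (seq_cons e \<rho> n) (seq_cons e \<rho> (Suc n))" by (cases n) auto
qed

lemma pre_0: "pre w \<rho> 0 = (w @ [\<rho> 0]) ! 0"
  by (cases w) (auto simp: pre_def)

lemma adm_pre: "pre w \<rho> \<in> admissible_seqs A \<longleftrightarrow> admissible_word A (w @ [\<rho> 0]) \<and> \<rho> \<in> admissible_seqs A"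
proof (induction w)
  case Nil then show ?case by simp
next
  case (Cons e w)
  show ?case
    unfolding pre_Cons adm_seq_cons Cons pre_0
    by (auto simp: admissible_word_Cons)
qed

lemma shift_adm: "\<rho> \<in> admissible_seqs A \<Longrightarrow> (shift ^^ j) \<rho> \<in> admissible_seqs A"
  by (simp add: shift_funpow admissible_seqs_def)

lemma cylinder_iff: "\<tau> \<in> cylinder A w \<longleftrightarrow> \<tau> \<in> admissible_seqs A \<and> (\<forall>i<length w. \<tau> i = w ! i)"
  by (simp add: cylinder_def)

lemma pre_in_cylinder: "pre w \<rho> \<in> admissible_seqs A \<Longrightarrow> pre w \<rho> \<in> cylinder A w"
  by (simp add: cylinder_iff pre_def)

lemma cylinder_adm_word: "\<tau> \<in> cylinder A w \<Longrightarrow> admissible_word A w"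
  unfolding admissible_word_def
proof (intro allI impI)
  fix i assume t: "\<tau> \<in> cylinder A w" and i: "Suc i < length w"
  then have "\<tau> i = w ! i" "\<tau> (Suc i) = w ! Suc i" by (auto simp: cylinder_iff)
  moreover have "A (\<tau> i) (\<tau> (Suc i))" using t by (auto simp: cylinder_iff admissible_seqs_def)
  ultimately show "A (w ! i) (w ! Suc i)" by simp
qed

lemma shift_cylinder_single:
  assumes "\<tau> \<in> cylinder A w" "j < length w"
  shows "(shift ^^ j) \<tau> \<in> cylinder A [w ! j]"
  using assms by (auto simp: cylinder_iff shift_adm) (simp add: shift_funpow)

lemma cylinder_take: "\<tau> \<in> cylinder A w \<Longrightarrow> \<tau> \<in> cylinder A (take m w)"
  by (auto simp: cylinder_iff)

lemma cylinder_drop: "\<tau> \<in> cylinder A w \<Longrightarrow> m \<le> length w \<Longrightarrow> (shift ^^ m) \<tau> \<in> cylinder A (drop m w)"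
  using shift_adm[of \<tau> A m, unfolded shift_funpow]
  using shift_adm[of \<tau> A m, unfolded shift_funpow]
  by (auto simp: cylinder_iff shift_funpow add.commute)

lemma bs_Suc: "birkhoff_sum (Suc n) h \<tau> = birkhoff_sum n h \<tau> + h ((shift ^^ n) \<tau>)"
  by (simp add: birkhoff_sum_def)

lemma bs_0[simp]: "birkhoff_sum 0 h \<tau> = 0"
  by (simp add: birkhoff_sum_def)

lemma bs_1[simp]: "birkhoff_sum (Suc 0) h \<tau> = h \<tau>"
  by (simp add: birkhoff_sum_def)

lemma bs_add: "birkhoff_sum (m + n) h \<tau> = birkhoff_sum m h \<tau> + birkhoff_sum n h ((shift ^^ m) \<tau>)"
proof (induction n)
  case 0 then show ?case by simp
next
  case (Suc n)
  have "(shift ^^ (m + n)) \<tau> = (shift ^^ n) ((shift ^^ m) \<tau>)"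
    by (metis add.commute funpow_add comp_apply)
  then show ?case using Suc by (simp add: bs_Suc)
qed

lemma bs_pre_snoc:
  "birkhoff_sum (Suc (length w)) h (pre (w @ [e]) \<rho>) = birkhoff_sum (length w) h (pre w (seq_cons e \<rho>)) + h (seq_cons e \<rho>)"
  by (simp add: bs_Suc pre_snoc shift_pre)


locale tsetup =
  fixes A :: "'e::countable \<Rightarrow> 'e \<Rightarrow> bool" and f :: "(nat \<Rightarrow> 'e) \<Rightarrow> real"
    and \<alpha> x y Cf :: real
  assumes irr: "finitely_irreducible A"
    and alpha_pos: "\<alpha> > 0"
    and holdC: "\<And>n \<rho> \<rho>'. n \<ge> 1 \<Longrightarrow> \<rho> \<in> admissible_seqs A \<Longrightarrow> \<rho>' \<in> admissible_seqs A \<Longrightarrow>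
          (\<forall>i<n. \<rho> i = \<rho>' i) \<Longrightarrow> \<bar>f \<rho> - f \<rho>'\<bar> * exp (\<alpha> * (real n - 1)) \<le> Cf"
    and Cf_nonneg: "Cf \<ge> 0"
    and sumx: "summable_pot A (\<lambda>\<rho>. x * f \<rho>)"
begin

abbreviation "X \<equiv> admissible_seqs A"

definition "g = (\<lambda>\<rho>. x * f \<rho>)"
definition "Cg = \<bar>x\<bar> * Cf"

lemma Cg_nonneg: "Cg \<ge> 0"
  using Cf_nonneg by (simp add: Cg_def)

lemma f_holder:
  assumes "n \<ge> 1" "\<rho> \<in> X" "\<rho>' \<in> X" "\<forall>i<n. \<rho> i = \<rho>' i"
  shows "\<bar>f \<rho> - f \<rho>'\<bar> \<le> Cf * exp (- (\<alpha> * (real n - 1)))"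
proof -
  have h: "\<bar>f \<rho> - f \<rho>'\<bar> * exp (\<alpha> * (real n - 1)) \<le> Cf" using holdC assms by blast
  have "\<bar>f \<rho> - f \<rho>'\<bar> = \<bar>f \<rho> - f \<rho>'\<bar> * exp (\<alpha> * (real n - 1)) * exp (- (\<alpha> * (real n - 1)))"
    by (simp add: exp_minus)
  also have "\<dots> \<le> Cf * exp (- (\<alpha> * (real n - 1)))"
    using h by (intro mult_right_mono) auto
  finally show ?thesis .
qed

lemma g_holder:
  assumes "n \<ge> 1" "\<rho> \<in> X" "\<rho>' \<in> X" "\<forall>i<n. \<rho> i = \<rho>' i"
  shows "\<bar>g \<rho> - g \<rho>'\<bar> \<le> Cg * exp (- (\<alpha> * (real n - 1)))"
proof -
  have "\<bar>g \<rho> - g \<rho>'\<bar> = \<bar>x\<bar> * \<bar>f \<rho> - f \<rho>'\<bar>"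
    by (simp add: g_def abs_mult[symmetric] right_diff_distrib)
  also have "\<dots> \<le> \<bar>x\<bar> * (Cf * exp (- (\<alpha> * (real n - 1))))"
    using f_holder[OF assms] by (intro mult_left_mono) auto
  finally show ?thesis by (simp add: Cg_def)
qed

lemma g_holder1:
  assumes "\<rho> \<in> X" "\<rho>' \<in> X" "\<rho> 0 = \<rho>' 0"
  shows "\<bar>g \<rho> - g \<rho>'\<bar> \<le> Cg"
  using g_holder[of 1 \<rho> \<rho>'] assms by simp

definition "NE = {e. cylinder A [e] \<noteq> {}}"
definition "Fsup e = Sup (g ` cylinder A [e])"

lemma bdd_g: "bdd_above (g ` cylinder A [e])"
proof -
  have "\<forall>e. bdd_above ((\<lambda>\<rho>. x * f \<rho>) ` cylinder A [e])"
    using sumx unfolding summable_pot_def by (elim conjE)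
  then show ?thesis unfolding g_def by (rule spec)
qed

lemma Fsup_summable: "(\<lambda>e. exp (Fsup e)) summable_on NE"
  using sumx unfolding summable_pot_def g_def Fsup_def NE_def by blast

lemma Fsup_upper: "\<tau> \<in> cylinder A [e] \<Longrightarrow> g \<tau> \<le> Fsup e"
  unfolding Fsup_def by (rule cSup_upper) (auto simp: bdd_g)

lemma Fsup_lower:
  assumes t: "\<tau> \<in> cylinder A [e]"
  shows "Fsup e - Cg \<le> g \<tau>"
proof -
  have "Fsup e \<le> g \<tau> + Cg"
    unfolding Fsup_def
  proof (rule cSup_least)
    show "g ` cylinder A [e] \<noteq> {}" using t by auto
  next
    fix s assume "s \<in> g ` cylinder A [e]"
    then obtain \<tau>' where t': "\<tau>' \<in> cylinder A [e]" and s: "s = g \<tau>'" by auto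
    have "\<bar>g \<tau>' - g \<tau>\<bar> \<le> Cg"
      using t t' by (intro g_holder1) (auto simp: cylinder_iff)
    then show "s \<le> g \<tau> + Cg" using s by linarith
  qed
  then show ?thesis by linarith
qed

definition "Sig0 = infsum (\<lambda>e. exp (Fsup e)) NE"

lemma Sig0_nonneg: "0 \<le> Sig0"
  unfolding Sig0_def by (rule infsum_nonneg) auto

lemma seq_cons_cyl: "\<rho> \<in> X \<Longrightarrow> A e (\<rho> 0) \<Longrightarrow> seq_cons e \<rho> \<in> cylinder A [e]"
  by (simp add: cylinder_iff adm_seq_cons)

lemma seq_cons_X: "\<rho> \<in> X \<Longrightarrow> A e (\<rho> 0) \<Longrightarrow> seq_cons e \<rho> \<in> X"
  by (simp add: adm_seq_cons)

lemma Aset_NE: "\<rho> \<in> X \<Longrightarrow> {e. A e (\<rho> 0)} \<subseteq> NE"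
  unfolding NE_def using seq_cons_cyl by blast

lemma Fsup_summable_A:
  assumes "\<rho> \<in> X"
  shows "(\<lambda>e. exp (Fsup e)) summable_on {e. A e (\<rho> 0)}"
    and "infsum (\<lambda>e. exp (Fsup e)) {e. A e (\<rho> 0)} \<le> Sig0"
proof -
  show s: "(\<lambda>e. exp (Fsup e)) summable_on {e. A e (\<rho> 0)}"
    by (rule summable_on_subset_banach[OF Fsup_summable Aset_NE[OF assms]])
  show "infsum (\<lambda>e. exp (Fsup e)) {e. A e (\<rho> 0)} \<le> Sig0"
    unfolding Sig0_def by (rule infsum_mono2[OF s Fsup_summable Aset_NE[OF assms]]) auto
qed

definition R :: "((nat \<Rightarrow> 'e) \<Rightarrow> real) \<Rightarrow> (nat \<Rightarrow> 'e) \<Rightarrow> real" where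
  "R h \<rho> = (\<Sum>\<^sub>\<infinity>e\<in>{e. A e (\<rho> 0)}. exp (g (seq_cons e \<rho>)) * h (seq_cons e \<rho>))"

definition bX :: "((nat \<Rightarrow> 'e) \<Rightarrow> real) \<Rightarrow> bool" where
  "bX h \<longleftrightarrow> (\<exists>H. \<forall>\<tau>\<in>X. \<bar>h \<tau>\<bar> \<le> H)"

lemma R_summable:
  assumes r: "\<rho> \<in> X" and H: "\<forall>\<tau>\<in>X. \<bar>h \<tau>\<bar> \<le> H"
  shows "(\<lambda>e. exp (g (seq_cons e \<rho>)) * h (seq_cons e \<rho>)) summable_on {e. A e (\<rho> 0)}"
    and "\<bar>R h \<rho>\<bar> \<le> H * Sig0"
proof -
  have H0: "0 \<le> H" using H r by force
  have tb: "norm (exp (g (seq_cons e \<rho>)) * h (seq_cons e \<rho>)) \<le> H * exp (Fsup e)"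
    if "e \<in> {e. A e (\<rho> 0)}" for e
  proof -
    have c: "seq_cons e \<rho> \<in> cylinder A [e]" using that r seq_cons_cyl by auto
    have "norm (exp (g (seq_cons e \<rho>)) * h (seq_cons e \<rho>)) = exp (g (seq_cons e \<rho>)) * \<bar>h (seq_cons e \<rho>)\<bar>"
      by (simp add: abs_mult)
    also have "\<dots> \<le> exp (Fsup e) * H"
      using c Fsup_upper[OF c] H cylinder_iff
      by (intro mult_mono) auto
    finally show ?thesis by (simp add: mult.commute)
  qed
  have s1: "(\<lambda>e. H * exp (Fsup e)) summable_on {e. A e (\<rho> 0)}"
    by (rule summable_on_cmult_right[OF Fsup_summable_A(1)[OF r]])
  have ns: "(\<lambda>e. norm (exp (g (seq_cons e \<rho>)) * h (seq_cons e \<rho>))) summable_on {e. A e (\<rho> 0)}"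
    by (rule Infinite_Sum.abs_summable_on_comparison_test'[OF s1 tb]) auto
  then show s: "(\<lambda>e. exp (g (seq_cons e \<rho>)) * h (seq_cons e \<rho>)) summable_on {e. A e (\<rho> 0)}"
    by (rule abs_summable_summable)
  have "\<bar>R h \<rho>\<bar> \<le> infsum (\<lambda>e. norm (exp (g (seq_cons e \<rho>)) * h (seq_cons e \<rho>))) {e. A e (\<rho> 0)}"
    unfolding R_def using norm_infsum_bound[OF ns] by simp
  also have "\<dots> \<le> infsum (\<lambda>e. H * exp (Fsup e)) {e. A e (\<rho> 0)}"
    by (rule infsum_mono[OF ns s1 tb])
  also have "\<dots> = H * infsum (\<lambda>e. exp (Fsup e)) {e. A e (\<rho> 0)}"
    by (rule infsum_cmult_right')
  also have "\<dots> \<le> H * Sig0"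
    using Fsup_summable_A(2)[OF r] H0 by (intro mult_left_mono) auto
  finally show "\<bar>R h \<rho>\<bar> \<le> H * Sig0" .
qed

lemma bX_D: "bX h \<Longrightarrow> \<exists>H. \<forall>\<tau>\<in>X. \<bar>h \<tau>\<bar> \<le> H"
  by (simp add: bX_def)

lemma R_summ: "\<rho> \<in> X \<Longrightarrow> bX h \<Longrightarrow> (\<lambda>e. exp (g (seq_cons e \<rho>)) * h (seq_cons e \<rho>)) summable_on {e. A e (\<rho> 0)}"
  using R_summable(1) bX_D by blast

lemma R_bound: "\<forall>\<tau>\<in>X. \<bar>h \<tau>\<bar> \<le> H \<Longrightarrow> \<forall>\<tau>\<in>X. \<bar>R h \<tau>\<bar> \<le> H * Sig0"
  using R_summable(2) by blast

lemma R_bX: "bX h \<Longrightarrow> bX (R h)"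
  unfolding bX_def using R_bound by blast

lemma R_mono:
  assumes "\<rho> \<in> X" "bX h1" "bX h2" "\<forall>\<tau>\<in>X. h1 \<tau> \<le> h2 \<tau>"
  shows "R h1 \<rho> \<le> R h2 \<rho>"
  unfolding R_def
  by (rule infsum_mono[OF R_summ[OF assms(1,2)] R_summ[OF assms(1,3)]])
     (use assms seq_cons_X in \<open>auto intro!: mult_left_mono\<close>)

lemma R_add:
  assumes "\<rho> \<in> X" "bX h1" "bX h2"
  shows "R (\<lambda>\<tau>. h1 \<tau> + h2 \<tau>) \<rho> = R h1 \<rho> + R h2 \<rho>"
  unfolding R_def
  by (subst infsum_add[OF R_summ[OF assms(1,2)] R_summ[OF assms(1,3)], symmetric])
     (simp add: distrib_left)

lemma R_cmult: "R (\<lambda>\<tau>. c * h \<tau>) \<rho> = c * R h \<rho>"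
  unfolding R_def
  by (subst infsum_cmult_right'[symmetric]) (simp add: ac_simps)

lemma R_cong:
  assumes "\<rho> \<in> X" "\<forall>\<tau>\<in>X. h1 \<tau> = h2 \<tau>"
  shows "R h1 \<rho> = R h2 \<rho>"
  unfolding R_def by (rule infsum_cong) (use assms seq_cons_X in auto)

lemma R_nonneg:
  assumes "\<rho> \<in> X" "\<forall>\<tau>\<in>X. 0 \<le> h \<tau>"
  shows "0 \<le> R h \<rho>"
  unfolding R_def by (rule infsum_nonneg) (use assms seq_cons_X in auto)

lemma R_term:
  assumes r: "\<rho> \<in> X" and b: "bX h" and nn: "\<forall>\<tau>\<in>X. 0 \<le> h \<tau>" and e: "A e (\<rho> 0)"
  shows "exp (g (seq_cons e \<rho>)) * h (seq_cons e \<rho>) \<le> R h \<rho>"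
proof -
  have "sum (\<lambda>e. exp (g (seq_cons e \<rho>)) * h (seq_cons e \<rho>)) {e} \<le> R h \<rho>"
    unfolding R_def
    by (rule finite_sum_le_infsum[OF R_summ[OF r b]]) (use e nn seq_cons_X r in auto)
  then show ?thesis by simp
qed

lemma R_diff:
  assumes "\<rho> \<in> X" "bX h1" "bX h2"
  shows "R (\<lambda>\<tau>. h1 \<tau> - h2 \<tau>) \<rho> = R h1 \<rho> - R h2 \<rho>"
proof -
  have b2: "bX (\<lambda>\<tau>. (-1) * h2 \<tau>)" using assms(3) unfolding bX_def by auto
  have "R (\<lambda>\<tau>. h1 \<tau> - h2 \<tau>) \<rho> = R (\<lambda>\<tau>. h1 \<tau> + (-1) * h2 \<tau>) \<rho>" by simp
  also have "\<dots> = R h1 \<rho> + R (\<lambda>\<tau>. (-1) * h2 \<tau>) \<rho>" by (rule R_add[OF assms(1,2) b2])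
  also have "\<dots> = R h1 \<rho> - R h2 \<rho>" using R_cmult[of "-1" h2 \<rho>] by simp
  finally show ?thesis .
qed

lemma Rn_bound: "\<forall>\<tau>\<in>X. \<bar>h \<tau>\<bar> \<le> H \<Longrightarrow> \<forall>\<tau>\<in>X. \<bar>(R ^^ n) h \<tau>\<bar> \<le> H * Sig0 ^ n"
proof (induction n)
  case 0 then show ?case by simp
next
  case (Suc n)
  then have "\<forall>\<tau>\<in>X. \<bar>R ((R ^^ n) h) \<tau>\<bar> \<le> (H * Sig0 ^ n) * Sig0" by (intro R_bound) auto
  then show ?case by (simp add: ac_simps)
qed

lemma Rn_bX: "bX h \<Longrightarrow> bX ((R ^^ n) h)"
  unfolding bX_def using Rn_bound by blast

lemma Rn_cmult: "(R ^^ n) (\<lambda>\<tau>. c * h \<tau>) = (\<lambda>\<rho>. c * (R ^^ n) h \<rho>)"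
proof (induction n)
  case 0 then show ?case by simp
next
  case (Suc n)
  show ?case by (rule ext) (simp add: Suc R_cmult)
qed

lemma Rn_cong: "\<forall>\<tau>\<in>X. h1 \<tau> = h2 \<tau> \<Longrightarrow> \<forall>\<rho>\<in>X. (R ^^ n) h1 \<rho> = (R ^^ n) h2 \<rho>"
  by (induction n) (auto intro: R_cong)

lemma Rn_mono:
  assumes "bX h1" "bX h2" "\<forall>\<tau>\<in>X. h1 \<tau> \<le> h2 \<tau>"
  shows "\<forall>\<rho>\<in>X. (R ^^ n) h1 \<rho> \<le> (R ^^ n) h2 \<rho>"
proof (induction n)
  case 0 then show ?case using assms by simp
next
  case (Suc n)
  then show ?case using Rn_bX assms by (auto intro!: R_mono)
qed

lemma Rn_nonneg: "\<forall>\<tau>\<in>X. 0 \<le> h \<tau> \<Longrightarrow> \<forall>\<rho>\<in>X. 0 \<le> (R ^^ n) h \<rho>"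
  by (induction n) (auto intro: R_nonneg)

lemma Rn_add:
  assumes "bX h1" "bX h2"
  shows "\<forall>\<rho>\<in>X. (R ^^ n) (\<lambda>\<tau>. h1 \<tau> + h2 \<tau>) \<rho> = (R ^^ n) h1 \<rho> + (R ^^ n) h2 \<rho>"
proof (induction n)
  case 0 then show ?case by simp
next
  case (Suc n)
  show ?case
  proof
    fix \<rho> assume r: "\<rho> \<in> X"
    have "(R ^^ Suc n) (\<lambda>\<tau>. h1 \<tau> + h2 \<tau>) \<rho> = R (\<lambda>\<tau>. (R ^^ n) h1 \<tau> + (R ^^ n) h2 \<tau>) \<rho>"
      using Suc r by (simp add: R_cong)
    also have "\<dots> = (R ^^ Suc n) h1 \<rho> + (R ^^ Suc n) h2 \<rho>"
      using R_add[OF r Rn_bX[OF assms(1)] Rn_bX[OF assms(2)]] by simp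
    finally show "(R ^^ Suc n) (\<lambda>\<tau>. h1 \<tau> + h2 \<tau>) \<rho> = (R ^^ Suc n) h1 \<rho> + (R ^^ Suc n) h2 \<rho>" .
  qed
qed

lemma Rn_word:
  assumes nn: "\<forall>\<tau>\<in>X. 0 \<le> h \<tau>" and b: "bX h"
  shows "\<rho> \<in> X \<Longrightarrow> pre w \<rho> \<in> X \<Longrightarrow>
    exp (birkhoff_sum (length w) g (pre w \<rho>)) * h (pre w \<rho>) \<le> (R ^^ length w) h \<rho>"
proof (induction w arbitrary: \<rho> rule: rev_induct)
  case Nil then show ?case by simp
next
  case (snoc e w)
  have X1: "pre w (seq_cons e \<rho>) \<in> X" using snoc.prems by (simp add: pre_snoc)
  then have X2: "seq_cons e \<rho> \<in> X" by (simp add: adm_pre)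
  then have Ae: "A e (\<rho> 0)" by (simp add: adm_seq_cons)
  have "exp (birkhoff_sum (length (w @ [e])) g (pre (w @ [e]) \<rho>)) * h (pre (w @ [e]) \<rho>)
      = exp (g (seq_cons e \<rho>)) * (exp (birkhoff_sum (length w) g (pre w (seq_cons e \<rho>))) * h (pre w (seq_cons e \<rho>)))"
  proof -
    have "birkhoff_sum (length (w @ [e])) g (pre (w @ [e]) \<rho>) = birkhoff_sum (length w) g (pre w (seq_cons e \<rho>)) + g (seq_cons e \<rho>)"
      by (metis bs_pre_snoc length_append_singleton)
    then show ?thesis by (simp add: exp_add pre_snoc)
  qed
  also have "\<dots> \<le> exp (g (seq_cons e \<rho>)) * (R ^^ length w) h (seq_cons e \<rho>)"
    using snoc.IH[OF X2 X1] by (intro mult_left_mono) auto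
  also have "\<dots> \<le> R ((R ^^ length w) h) \<rho>"
    by (rule R_term[OF snoc.prems(1) Rn_bX[OF b] Rn_nonneg[OF nn] Ae])
  finally show ?case by simp
qed

end

lemma fekete:
  fixes a :: "nat \<Rightarrow> real"
  assumes sub: "\<And>m n. m \<ge> 1 \<Longrightarrow> n \<ge> 1 \<Longrightarrow> a (m + n) \<le> a m + a n"
    and low: "\<And>n. n \<ge> 1 \<Longrightarrow> a n \<ge> real n * \<gamma>"
  shows "(\<lambda>n. a n / real n) \<longlonglongrightarrow> (INF n\<in>{1..}. a n / real n)"
proof -
  define P where "P = (INF n\<in>{1..}. a n / real n)"
  have bdd: "bdd_below ((\<lambda>n. a n / real n) ` {1..})"
  proof (rule bdd_belowI2)
    fix n :: nat assume "n \<in> {1..}"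
    then have "n \<ge> 1" by simp
    then show "\<gamma> \<le> a n / real n" using low[of n] by (simp add: field_simps)
  qed
  have lower: "P \<le> a n / real n" if "n \<ge> 1" for n
    unfolding P_def by (rule cINF_lower[OF bdd]) (use that in auto)
  have upper: "\<forall>\<^sub>F n in sequentially. a n / real n < P + \<epsilon>" if eps: "\<epsilon> > 0" for \<epsilon>
  proof -
    have "(INF n\<in>{1..}. a n / real n) < P + \<epsilon> / 2" using eps unfolding P_def by simp
    then obtain N where N1: "N \<ge> 1" and aN: "a N / real N < P + \<epsilon> / 2"
      using cINF_less_iff[OF _ bdd, of "P + \<epsilon> / 2"] by fastforce
    define B where "B = (\<Sum>r\<in>{1..N}. \<bar>a r\<bar>)"
    have claim: "a (q * N + r) \<le> real q * a N + B" if r: "r \<in> {1..N}" for q r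
    proof (induction q)
      case 0
      have "a r \<le> \<bar>a r\<bar>" by simp
      also have "\<dots> \<le> B" unfolding B_def by (rule member_le_sum) (use r in auto)
      finally show ?case by simp
    next
      case (Suc q)
      have "a (Suc q * N + r) = a (N + (q * N + r))" by (simp add: algebra_simps)
      also have "\<dots> \<le> a N + a (q * N + r)" using N1 r by (intro sub) auto
      also have "\<dots> \<le> a N + (real q * a N + B)" using Suc by simp
      finally show ?case by (simp add: algebra_simps)
    qed
    define t where "t = a N / real N"
    have bound: "a n \<le> real n * t + \<bar>a N\<bar> + B" if n1: "n \<ge> 1" for n
    proof -
      define q where "q = (n - 1) div N"
      define r where "r = (n - 1) mod N + 1"
      have r: "r \<in> {1..N}" unfolding r_def using N1
        by (simp add: Suc_leI)
      have nqr: "n = q * N + r" unfolding q_def r_def using n1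
        by (metis add.commute add_diff_inverse_nat div_mult_mod_eq group_cancel.add1 less_one not_le)
      have qN: "real q * real N \<le> real n" using nqr by (simp add: of_nat_mult[symmetric] del: of_nat_mult)
      have qN2: "real n - real N \<le> real q * real N" using nqr r
        by (simp add: of_nat_mult[symmetric] del: of_nat_mult)
      have aNt: "a N = real N * t" unfolding t_def using N1 by simp
      have "real q * a N \<le> real n * t + \<bar>a N\<bar>"
      proof (cases "t \<ge> 0")
        case True
        have "real q * a N = (real q * real N) * t" using aNt by simp
        also have "\<dots> \<le> real n * t" using qN True by (intro mult_right_mono) auto
        finally show ?thesis by simp
      next
        case False
        have "real q * a N = (real q * real N) * t" using aNt by simp
        also have "\<dots> \<le> (real n - real N) * t" using qN2 False by (intro mult_right_mono_neg) auto
        also have "\<dots> = real n * t - a N" using aNt by (simp add: algebra_simps)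
        finally show ?thesis by simp
      qed
      then show ?thesis using claim[OF r, of q] nqr by simp
    qed
    have ev: "\<forall>\<^sub>F n in sequentially. (\<bar>a N\<bar> + B) / real n < \<epsilon> / 2"
    proof -
      have "(\<lambda>n. (\<bar>a N\<bar> + B) / real n) \<longlonglongrightarrow> 0"
        by (rule tendsto_divide_0[OF tendsto_const filterlim_at_top_imp_at_infinity[OF filterlim_real_sequentially]])
      then show ?thesis using eps unfolding order_tendsto_iff by (meson half_gt_zero)
    qed
    show ?thesis
      using ev eventually_ge_at_top[of 1]
    proof eventually_elim
      case (elim n)
      have "a n / real n \<le> (real n * t + \<bar>a N\<bar> + B) / real n"
        using bound[OF elim(2)] elim(2) by (intro divide_right_mono) auto
      also have "\<dots> = t + (\<bar>a N\<bar> + B) / real n" using elim(2) by (simp add: field_simps)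
      also have "\<dots> < P + \<epsilon>" using elim(1) aN unfolding t_def by linarith
      finally show ?case .
    qed
  qed
  show ?thesis
    unfolding P_def[symmetric]
  proof (rule order_tendstoI)
    fix b assume "b < P"
    show "\<forall>\<^sub>F n in sequentially. b < a n / real n"
      using eventually_ge_at_top[of 1]
      by eventually_elim (use lower \<open>b < P\<close> in force)
  next
    fix b assume "P < b"
    then show "\<forall>\<^sub>F n in sequentially. a n / real n < b"
      using upper[of "b - P"] by simp
  qed
qed

context tsetup
begin

definition "Zset m = {w \<in> adm_words A m. cylinder A w \<noteq> {}}"
definition "E m w = exp (Sup (birkhoff_sum m g ` cylinder A w))"
definition "Z m = infsum (E m) (Zset m)"

lemma S_bounds:
  assumes t: "\<tau> \<in> cylinder A w"
  shows "birkhoff_sum (length w) g \<tau> \<le> (\<Sum>j<length w. Fsup (w ! j))"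
    and "(\<Sum>j<length w. Fsup (w ! j) - Cg) \<le> birkhoff_sum (length w) g \<tau>"
proof -
  show "birkhoff_sum (length w) g \<tau> \<le> (\<Sum>j<length w. Fsup (w ! j))"
    unfolding birkhoff_sum_def
    by (rule sum_mono) (use shift_cylinder_single[OF t] Fsup_upper in auto)
  show "(\<Sum>j<length w. Fsup (w ! j) - Cg) \<le> birkhoff_sum (length w) g \<tau>"
    unfolding birkhoff_sum_def
    by (rule sum_mono) (use shift_cylinder_single[OF t] Fsup_lower in auto)
qed

lemma bdd_S: "bdd_above (birkhoff_sum (length w) g ` cylinder A w)"
  using S_bounds(1) by (intro bdd_aboveI2) auto

lemma S_le_Sup: "\<tau> \<in> cylinder A w \<Longrightarrow> birkhoff_sum (length w) g \<tau> \<le> Sup (birkhoff_sum (length w) g ` cylinder A w)"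
  by (rule cSup_upper) (auto simp: bdd_S)

lemma E_pos: "E m w > 0"
  by (simp add: E_def)

lemma Zset_length: "w \<in> Zset m \<Longrightarrow> length w = m"
  by (simp add: Zset_def adm_words_def)

lemma take_drop_Zset:
  assumes w: "w \<in> Zset (m + n)"
  shows "take m w \<in> Zset m" "drop m w \<in> Zset n"
proof -
  obtain \<tau> where t: "\<tau> \<in> cylinder A w" using w by (auto simp: Zset_def)
  have lw: "length w = m + n" using Zset_length[OF w] .
  have t1: "\<tau> \<in> cylinder A (take m w)" by (rule cylinder_take[OF t])
  have t2: "(shift ^^ m) \<tau> \<in> cylinder A (drop m w)" by (rule cylinder_drop[OF t]) (simp add: lw)
  show "take m w \<in> Zset m"
    using t1 lw cylinder_adm_word[OF t1] by (auto simp: Zset_def adm_words_def)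
  show "drop m w \<in> Zset n"
    using t2 lw cylinder_adm_word[OF t2] by (auto simp: Zset_def adm_words_def)
qed

lemma E_split:
  assumes w: "w \<in> Zset (m + n)"
  shows "E (m + n) w \<le> E m (take m w) * E n (drop m w)"
proof -
  have lw: "length w = m + n" using Zset_length[OF w] .
  have ne: "cylinder A w \<noteq> {}" using w by (simp add: Zset_def)
  have "Sup (birkhoff_sum (m + n) g ` cylinder A w) \<le>
        Sup (birkhoff_sum m g ` cylinder A (take m w)) + Sup (birkhoff_sum n g ` cylinder A (drop m w))"
  proof (rule cSup_least)
    show "birkhoff_sum (m + n) g ` cylinder A w \<noteq> {}" using ne by simp
  next
    fix s assume "s \<in> birkhoff_sum (m + n) g ` cylinder A w"
    then obtain \<tau> where t: "\<tau> \<in> cylinder A w" and s: "s = birkhoff_sum (m + n) g \<tau>" by auto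
    have t1: "\<tau> \<in> cylinder A (take m w)" by (rule cylinder_take[OF t])
    have t2: "(shift ^^ m) \<tau> \<in> cylinder A (drop m w)" by (rule cylinder_drop[OF t]) (simp add: lw)
    have l1: "length (take m w) = m" and l2: "length (drop m w) = n" using lw by auto
    have "s = birkhoff_sum m g \<tau> + birkhoff_sum n g ((shift ^^ m) \<tau>)" using s by (simp add: bs_add)
    also have "\<dots> \<le> Sup (birkhoff_sum m g ` cylinder A (take m w)) + Sup (birkhoff_sum n g ` cylinder A (drop m w))"
      using S_le_Sup[OF t1] S_le_Sup[OF t2] unfolding l1 l2 by (rule add_mono)
    finally show "s \<le> \<dots>" .
  qed
  then show ?thesis unfolding E_def by (simp add: exp_add[symmetric])
qed

lemma finite_split:
  assumes F: "finite F" "F \<subseteq> Zset (m + n)"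
  shows "sum (E (m + n)) F \<le> sum (E m) (take m ` F) * sum (E n) (drop m ` F)"
proof -
  have "sum (E (m + n)) F \<le> sum (\<lambda>w. E m (take m w) * E n (drop m w)) F"
    using E_split F by (intro sum_mono) auto
  also have "\<dots> = sum (\<lambda>(u, v). E m u * E n v) ((\<lambda>w. (take m w, drop m w)) ` F)"
  proof (subst sum.reindex)
    show "inj_on (\<lambda>w. (take m w, drop m w)) F"
      by (rule inj_onI) (metis append_take_drop_id prod.inject)
  qed (simp add: o_def)
  also have "\<dots> \<le> sum (\<lambda>(u, v). E m u * E n v) (take m ` F \<times> drop m ` F)"
    by (rule sum_mono2) (use F in \<open>auto intro!: mult_nonneg_nonneg less_imp_le[OF E_pos]\<close>)
  also have "\<dots> = sum (E m) (take m ` F) * sum (E n) (drop m ` F)"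
    by (simp add: sum_product sum.cartesian_product)
  finally show ?thesis .
qed

lemma X_nonempty_from_Zset: "w \<in> Zset m \<Longrightarrow> X \<noteq> {}"
  by (auto simp: Zset_def cylinder_iff)

lemma Zset0_sub: "Zset 0 \<subseteq> {[]}"
  by (auto simp: Zset_def adm_words_def)

lemma E0: "E 0 [] = 1" if "X \<noteq> {}"
proof -
  have "birkhoff_sum 0 g ` cylinder A [] = {0}" using that by (auto simp: cylinder_iff)
  then show ?thesis by (simp add: E_def)
qed

lemma E1: "E (Suc 0) [e] = exp (Fsup e)"
proof -
  have "birkhoff_sum (Suc 0) g ` cylinder A [e] = g ` cylinder A [e]" by simp
  then show ?thesis by (simp add: E_def Fsup_def)
qed

lemma Zset1_sum:
  assumes "finite U" "U \<subseteq> Zset (Suc 0)"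
  shows "sum (E (Suc 0)) U \<le> Sig0"
proof -
  have sing: "\<And>w. w \<in> U \<Longrightarrow> w = [hd w]" using assms(2) Zset_length
      by (metis (no_types, lifting) One_nat_def Suc_length_conv length_0_conv list.sel(1) subsetD)
  have U: "U = (\<lambda>e. [e]) ` (hd ` U)"
    using sing by (auto simp: image_image)
  have sub: "hd ` U \<subseteq> NE"
  proof
    fix e assume "e \<in> hd ` U"
    then obtain w where "w \<in> U" "e = hd w" by auto
    then have "[e] \<in> Zset (Suc 0)" using sing assms(2) by auto
    then show "e \<in> NE" by (simp add: Zset_def NE_def)
  qed
  have "sum (E (Suc 0)) U = sum (\<lambda>e. E (Suc 0) [e]) (hd ` U)"
    by (subst U, subst sum.reindex) (auto simp: inj_on_def)
  also have "\<dots> = sum (\<lambda>e. exp (Fsup e)) (hd ` U)" by (simp add: E1)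
  also have "\<dots> \<le> Sig0"
    unfolding Sig0_def by (rule finite_sum_le_infsum[OF Fsup_summable]) (use assms sub in auto)
  finally show ?thesis .
qed

end


context tsetup
begin

lemma finite_sums_bound: "finite F \<Longrightarrow> F \<subseteq> Zset n \<Longrightarrow> sum (E n) F \<le> Sig0 ^ n"
proof (induction n arbitrary: F)
  case 0
  show ?case
  proof (cases "F = {}")
    case True then show ?thesis by simp
  next
    case False
    then obtain w where "w \<in> F" by auto
    then have Xne: "X \<noteq> {}" using 0 X_nonempty_from_Zset by blast
    have "F = {[]}" using False 0 Zset0_sub by blast
    then show ?thesis using E0[OF Xne] by simp
  qed
next
  case (Suc n)
  have F: "F \<subseteq> Zset (Suc 0 + n)" using Suc.prems by simp
  have "sum (E (Suc n)) F = sum (E (Suc 0 + n)) F" by simp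
  also have "\<dots> \<le> sum (E (Suc 0)) (take (Suc 0) ` F) * sum (E n) (drop (Suc 0) ` F)"
    by (rule finite_split[OF Suc.prems(1) F])
  also have "\<dots> \<le> Sig0 * Sig0 ^ n"
  proof (rule mult_mono)
    show "sum (E (Suc 0)) (take (Suc 0) ` F) \<le> Sig0"
      by (rule Zset1_sum) (use Suc.prems F take_drop_Zset(1) in blast)+
    show "sum (E n) (drop (Suc 0) ` F) \<le> Sig0 ^ n"
      by (rule Suc.IH) (use Suc.prems F take_drop_Zset(2) in blast)+
    show "0 \<le> Sig0" by (rule Sig0_nonneg)
    show "0 \<le> sum (E n) (drop (Suc 0) ` F)" by (rule sum_nonneg) (simp add: less_imp_le[OF E_pos])
  qed
  finally show ?case by simp
qed

lemma Z_summable: "(E n) summable_on (Zset n)"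
  by (rule nonneg_bdd_above_summable_on)
     (auto simp: less_imp_le[OF E_pos] intro!: bdd_aboveI2 finite_sums_bound)

lemma Z_le: "Z n \<le> Sig0 ^ n"
  unfolding Z_def by (rule infsum_le_finite_sums[OF Z_summable finite_sums_bound])

lemma Z_nonneg: "0 \<le> Z n"
  unfolding Z_def by (rule infsum_nonneg) (simp add: less_imp_le[OF E_pos])

lemma sum_le_Z: "finite F \<Longrightarrow> F \<subseteq> Zset n \<Longrightarrow> sum (E n) F \<le> Z n"
  unfolding Z_def by (rule finite_sum_le_infsum[OF Z_summable]) (auto simp: less_imp_le[OF E_pos])

lemma E_le_Z: "w \<in> Zset n \<Longrightarrow> E n w \<le> Z n"
  using sum_le_Z[of "{w}" n] by simp

lemma Z_submult: "Z (m + n) \<le> Z m * Z n"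
  unfolding Z_def[of "m + n"]
proof (rule infsum_le_finite_sums[OF Z_summable])
  fix F assume F: "finite F" "F \<subseteq> Zset (m + n)"
  have "sum (E (m + n)) F \<le> sum (E m) (take m ` F) * sum (E n) (drop m ` F)"
    by (rule finite_split[OF F])
  also have "\<dots> \<le> Z m * Z n"
  proof (rule mult_mono)
    show "sum (E m) (take m ` F) \<le> Z m" by (rule sum_le_Z) (use F take_drop_Zset(1) in blast)+
    show "sum (E n) (drop m ` F) \<le> Z n" by (rule sum_le_Z) (use F take_drop_Zset(2) in blast)+
    show "0 \<le> Z m" by (rule Z_nonneg)
    show "0 \<le> sum (E n) (drop m ` F)" by (rule sum_nonneg) (simp add: less_imp_le[OF E_pos])
  qed
  finally show "sum (E (m + n)) F \<le> Z m * Z n" .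
qed

lemma pfin: "pressure_finite_at A (\<lambda>\<rho>. x * f \<rho>) n"
  unfolding pressure_finite_at_def
proof
  show "\<forall>w\<in>adm_words A n. bdd_above (birkhoff_sum n (\<lambda>\<rho>. x * f \<rho>) ` cylinder A w)"
    using bdd_S unfolding g_def adm_words_def by auto
  show "(\<lambda>w. exp (Sup (birkhoff_sum n (\<lambda>\<rho>. x * f \<rho>) ` cylinder A w))) summable_on
        {w \<in> adm_words A n. cylinder A w \<noteq> {}}"
    using Z_summable[of n] unfolding E_def Zset_def g_def .
qed

definition "Om = (SOME \<Omega>. finite \<Omega> \<and> (\<forall>w\<in>\<Omega>. admissible_word A w) \<and>
                  (\<forall>e e'. \<exists>w\<in>\<Omega>. admissible_word A (e # w @ [e'])))"

lemma Om: "finite Om" "\<forall>e e'. \<exists>w\<in>Om. admissible_word A (e # w @ [e'])"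
  using someI_ex[OF irr[unfolded finitely_irreducible_def]] unfolding Om_def by blast+

definition "cyc = undefined # (SOME w. w \<in> Om \<and> admissible_word A (undefined # w @ [undefined]))"

lemma cyc_adm: "admissible_word A (cyc @ [cyc ! 0])"
proof -
  have "\<exists>w. w \<in> Om \<and> admissible_word A (undefined # w @ [undefined])" using Om(2) by blast
  then have "admissible_word A (undefined # (SOME w. w \<in> Om \<and> admissible_word A (undefined # w @ [undefined])) @ [undefined])"
    by (rule someI2_ex) blast
  then show ?thesis unfolding cyc_def by simp
qed

definition "per = length cyc"

lemma per_pos: "per > 0"
  by (simp add: per_def cyc_def)

definition "pip i = cyc ! (i mod per)"

lemma pip_X: "pip \<in> X"
  unfolding admissible_seqs_def mem_Collect_eq
proof (intro allI)
  fix i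
  define r where "r = i mod per"
  have r: "r < per" unfolding r_def using per_pos by simp
  have adm: "A ((cyc @ [cyc ! 0]) ! r) ((cyc @ [cyc ! 0]) ! Suc r)"
    using cyc_adm r unfolding admissible_word_def per_def by simp
  have a1: "(cyc @ [cyc ! 0]) ! r = pip i" unfolding pip_def r_def[symmetric] using r per_def by (simp add: nth_append)
  have a2: "(cyc @ [cyc ! 0]) ! Suc r = pip (Suc i)"
  proof (cases "Suc r = per")
    case True
    then have "Suc i mod per = 0" unfolding r_def by (simp add: mod_Suc)
    then show ?thesis unfolding pip_def using True per_def by (simp add: nth_append)
  next
    case False
    then have "Suc i mod per = Suc r" unfolding r_def by (simp add: mod_Suc)
    then show ?thesis unfolding pip_def using False r per_def by (simp add: nth_append)
  qed
  show "A (pip i) (pip (Suc i))" using adm a1 a2 by simp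
qed

lemma X_nonempty: "X \<noteq> {}"
  using pip_X by blast

lemma shift_pip: "(shift ^^ j) pip = (shift ^^ (j mod per)) pip"
  by (rule ext) (simp add: shift_funpow pip_def mod_add_right_eq)

lemma shift_per: "(shift ^^ per) pip = pip"
  using shift_pip[of per] by simp

lemma Z_lower: "\<exists>\<gamma>. \<forall>n. real n * \<gamma> \<le> ln (Z n) \<and> 0 < Z n"
proof -
  define \<gamma> where "\<gamma> = - (\<Sum>j<per. \<bar>g ((shift ^^ j) pip)\<bar>)"
  have gj: "\<gamma> \<le> g ((shift ^^ j) pip)" for j
  proof -
    have "\<bar>g ((shift ^^ (j mod per)) pip)\<bar> \<le> (\<Sum>j<per. \<bar>g ((shift ^^ j) pip)\<bar>)"
      by (rule member_le_sum) (use per_pos in auto)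
    moreover have "g ((shift ^^ j) pip) = g ((shift ^^ (j mod per)) pip)" using shift_pip[of j] by simp
    moreover have "- \<bar>g ((shift ^^ (j mod per)) pip)\<bar> \<le> g ((shift ^^ (j mod per)) pip)" by simp
    ultimately show ?thesis unfolding \<gamma>_def by linarith
  qed
  have "real n * \<gamma> \<le> ln (Z n) \<and> 0 < Z n" for n
  proof -
    define w where "w = map pip [0..<n]"
    have c: "pip \<in> cylinder A w" unfolding w_def using pip_X by (simp add: cylinder_iff)
    have lw: "length w = n" by (simp add: w_def)
    have wZ: "w \<in> Zset n" using c lw cylinder_adm_word[OF c] by (auto simp: Zset_def adm_words_def)
    have "real n * \<gamma> = (\<Sum>j<n. \<gamma>)" by simp
    also have "\<dots> \<le> birkhoff_sum n g pip" unfolding birkhoff_sum_def by (rule sum_mono) (rule gj)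
    also have "\<dots> \<le> Sup (birkhoff_sum n g ` cylinder A w)" using S_le_Sup[OF c] lw by simp
    finally have "exp (real n * \<gamma>) \<le> E n w" unfolding E_def by simp
    also have "\<dots> \<le> Z n" by (rule E_le_Z[OF wZ])
    finally have ez: "exp (real n * \<gamma>) \<le> Z n" .
    then have zp: "0 < Z n" using exp_gt_zero less_le_trans by blast
    have "real n * \<gamma> \<le> ln (Z n)" using ez zp by (metis ln_exp ln_le_cancel_iff exp_gt_zero)
    then show ?thesis using zp by simp
  qed
  then show ?thesis by blast
qed

lemma Z_pos: "0 < Z n"
  using Z_lower by blast

definition "Pr = (INF n\<in>{1..}. ln (Z n) / real n)"

lemma Z_lim: "(\<lambda>n. ln (Z n) / real n) \<longlonglongrightarrow> Pr"
proof -
  obtain \<gamma> where \<gamma>: "\<And>n. real n * \<gamma> \<le> ln (Z n)" using Z_lower by blast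
  show ?thesis unfolding Pr_def
  proof (rule fekete)
    fix m n :: nat
    have "ln (Z (m + n)) \<le> ln (Z m * Z n)"
      using Z_submult Z_pos by (simp add: ln_le_cancel_iff)
    also have "\<dots> = ln (Z m) + ln (Z n)" using Z_pos[of m] Z_pos[of n] by (simp add: ln_mult)
    finally show "ln (Z (m + n)) \<le> ln (Z m) + ln (Z n)" .
  next
    fix n :: nat show "real n * \<gamma> \<le> ln (Z n)" by (rule \<gamma>)
  qed
qed

lemma pressure_eq: "pressure A (\<lambda>\<rho>. x * f \<rho>) = ereal Pr"
proof -
  have eq: "(\<lambda>n. ereal (ln (\<Sum>\<^sub>\<infinity>w\<in>{w\<in>adm_words A n. cylinder A w \<noteq> {}}.
                     exp (Sup (birkhoff_sum n (\<lambda>\<rho>. x * f \<rho>) ` cylinder A w))) / real n))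
           = (\<lambda>n. ereal (ln (Z n) / real n))"
    by (simp add: Z_def E_def[abs_def] Zset_def g_def)
  have "(\<lambda>n. ereal (ln (Z n) / real n)) \<longlonglongrightarrow> ereal Pr"
    using Z_lim by (simp add: lim_ereal)
  then have "lim (\<lambda>n. ereal (ln (Z n) / real n)) = ereal Pr" by (rule limI)
  then show ?thesis unfolding pressure_def eq using pfin by simp
qed

definition "Wd m \<rho> = {w. length w = m \<and> pre w \<rho> \<in> X}"
definition "Q m \<rho> = infsum (\<lambda>w. exp (birkhoff_sum m g (pre w \<rho>))) (Wd m \<rho>)"

lemma Wd_Zset: "\<rho> \<in> X \<Longrightarrow> Wd m \<rho> \<subseteq> Zset m"
proof
  fix w assume "w \<in> Wd m \<rho>"
  then have w: "length w = m" "pre w \<rho> \<in> X" by (auto simp: Wd_def)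
  have c: "pre w \<rho> \<in> cylinder A w" by (rule pre_in_cylinder[OF w(2)])
  show "w \<in> Zset m" using c w cylinder_adm_word[OF c] by (auto simp: Zset_def adm_words_def)
qed

lemma Wd_term_le: "w \<in> Wd m \<rho> \<Longrightarrow> exp (birkhoff_sum m g (pre w \<rho>)) \<le> E m w"
proof -
  assume "w \<in> Wd m \<rho>"
  then have w: "length w = m" "pre w \<rho> \<in> X" by (auto simp: Wd_def)
  have c: "pre w \<rho> \<in> cylinder A w" by (rule pre_in_cylinder[OF w(2)])
  show ?thesis unfolding E_def using S_le_Sup[OF c] w(1) by simp
qed

lemma Q_summable: "\<rho> \<in> X \<Longrightarrow> (\<lambda>w. exp (birkhoff_sum m g (pre w \<rho>))) summable_on (Wd m \<rho>)"
  by (rule summable_on_comparison_test[OF summable_on_subset_banach[OF Z_summable Wd_Zset]])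
     (auto intro: Wd_term_le)

lemma Q_le_Z: "\<rho> \<in> X \<Longrightarrow> Q m \<rho> \<le> Z m"
proof -
  assume r: "\<rho> \<in> X"
  have "Q m \<rho> \<le> infsum (E m) (Wd m \<rho>)"
    unfolding Q_def
    by (rule infsum_mono[OF Q_summable[OF r] summable_on_subset_banach[OF Z_summable Wd_Zset[OF r]]])
       (rule Wd_term_le)
  also have "\<dots> \<le> Z m"
    unfolding Z_def
    by (rule infsum_mono2[OF summable_on_subset_banach[OF Z_summable Wd_Zset[OF r]] Z_summable Wd_Zset[OF r]])
       (simp add: less_imp_le[OF E_pos])
  finally show ?thesis .
qed

lemma Q_nonneg: "0 \<le> Q m \<rho>"
  unfolding Q_def by (rule infsum_nonneg) simp

lemma Rn1_le_Q: "\<rho> \<in> X \<Longrightarrow> (R ^^ m) (\<lambda>_. 1) \<rho> \<le> Q m \<rho>"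
proof (induction m arbitrary: \<rho>)
  case 0
  have "Wd 0 \<rho> = {[]}" using 0 by (auto simp: Wd_def)
  then show ?case by (simp add: Q_def)
next
  case (Suc m)
  have r: "\<rho> \<in> X" by (rule Suc.prems)
  have b1: "bX (\<lambda>_. 1)" unfolding bX_def by auto
  have bQ: "bX (Q m)" unfolding bX_def
    by (rule exI[of _ "Z m"]) (simp add: Q_le_Z Q_nonneg)
  define S where "S = Sigma {e. A e (\<rho> 0)} (\<lambda>e. Wd m (seq_cons e \<rho>))"
  define J where "J = (\<lambda>(e::'e, w::'e list). w @ [e])"
  define h where "h = (\<lambda>u. exp (birkhoff_sum (Suc m) g (pre u \<rho>)))"
  have JS: "J ` S \<subseteq> Wd (Suc m) \<rho>"
    unfolding J_def S_def Wd_def by (auto simp: pre_snoc)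
  have injJ: "inj_on J S" unfolding J_def by (rule inj_onI) auto
  have hs: "h summable_on (Wd (Suc m) \<rho>)" unfolding h_def by (rule Q_summable[OF r])
  have hJS: "h summable_on (J ` S)" by (rule summable_on_subset_banach[OF hs JS])
  have hJ0: "exp (g (seq_cons e \<rho>)) * exp (birkhoff_sum m g (pre w (seq_cons e \<rho>))) = h (w @ [e])"
    if lw: "length w = m" for e w
  proof -
    have eq: "birkhoff_sum (Suc m) g (pre (w @ [e]) \<rho>) = birkhoff_sum m g (pre w (seq_cons e \<rho>)) + g (seq_cons e \<rho>)"
      using bs_pre_snoc[of w g e \<rho>] unfolding lw .
    show ?thesis unfolding h_def eq exp_add by (rule mult.commute)
  qed
  have hJ: "\<And>p. p \<in> S \<Longrightarrow> (\<lambda>(e, w). exp (g (seq_cons e \<rho>)) * exp (birkhoff_sum m g (pre w (seq_cons e \<rho>)))) p = (h \<circ> J) p"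
  proof -
    fix p assume p: "p \<in> S"
    obtain e w where pe: "p = (e, w)" by (cases p)
    have lw: "length w = m" using p unfolding pe S_def Wd_def by simp
    show "(\<lambda>(e, w). exp (g (seq_cons e \<rho>)) * exp (birkhoff_sum m g (pre w (seq_cons e \<rho>)))) p = (h \<circ> J) p"
      unfolding pe J_def comp_apply prod.case by (rule hJ0[OF lw])
  qed
  have sumS: "(\<lambda>(e, w). exp (g (seq_cons e \<rho>)) * exp (birkhoff_sum m g (pre w (seq_cons e \<rho>)))) summable_on S"
  proof -
    have hJs: "(h \<circ> J) summable_on S" by (rule iffD1[OF summable_on_reindex[OF injJ, of h] hJS])
    show ?thesis by (rule summable_on_cong[THEN iffD2, OF _ hJs]) (rule hJ)
  qed
  have infS: "infsum (\<lambda>(e, w). exp (g (seq_cons e \<rho>)) * exp (birkhoff_sum m g (pre w (seq_cons e \<rho>)))) S = infsum h (J ` S)"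
  proof -
    have "infsum (\<lambda>(e, w). exp (g (seq_cons e \<rho>)) * exp (birkhoff_sum m g (pre w (seq_cons e \<rho>)))) S = infsum (h \<circ> J) S"
      by (rule infsum_cong) (rule hJ)
    also have "\<dots> = infsum h (J ` S)" by (rule infsum_reindex[OF injJ, symmetric])
    finally show ?thesis .
  qed
  have "(R ^^ Suc m) (\<lambda>_. 1) \<rho> = R ((R ^^ m) (\<lambda>_. 1)) \<rho>" by simp
  also have "\<dots> \<le> R (Q m) \<rho>"
    by (rule R_mono[OF r Rn_bX[OF b1] bQ]) (use Suc.IH in auto)
  also have "\<dots> = (\<Sum>\<^sub>\<infinity>e\<in>{e. A e (\<rho> 0)}. \<Sum>\<^sub>\<infinity>w\<in>Wd m (seq_cons e \<rho>).
                     exp (g (seq_cons e \<rho>)) * exp (birkhoff_sum m g (pre w (seq_cons e \<rho>))))"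
    unfolding R_def Q_def by (simp add: infsum_cmult_right')
  also have "\<dots> = infsum (\<lambda>(e, w). exp (g (seq_cons e \<rho>)) * exp (birkhoff_sum m g (pre w (seq_cons e \<rho>)))) S"
    unfolding S_def
    by (rule infsum_Sigma'_banach) (use sumS in \<open>simp add: S_def\<close>)
  also have "\<dots> = infsum h (J ` S)" by (rule infS)
  also have "\<dots> \<le> infsum h (Wd (Suc m) \<rho>)"
    by (rule infsum_mono2[OF hJS hs JS]) (simp add: h_def)
  also have "\<dots> = Q (Suc m) \<rho>" by (simp add: h_def Q_def)
  finally show ?case .
qed

lemma Rn1_le_Z: "\<rho> \<in> X \<Longrightarrow> (R ^^ m) (\<lambda>_. 1) \<rho> \<le> Z m"
  using Rn1_le_Q Q_le_Z order_trans by blast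

end


lemma norm_exp_minus_one: "norm (exp (z::complex) - 1) \<le> norm z * exp (norm z)"
proof -
  have "norm (exp z - exp 0) \<le> exp (norm z) * norm (z - 0)"
  proof (rule field_differentiable_bound[of "cball 0 (norm z)" exp exp])
    show "convex (cball (0::complex) (norm z))" by simp
    show "(exp has_field_derivative exp w) (at w within cball 0 (norm z))" for w :: complex
      by (auto intro!: derivative_eq_intros)
    show "norm (exp w) \<le> exp (norm z)" if "w \<in> cball 0 (norm z)" for w :: complex
    proof -
      have "Re w \<le> norm w" by (rule complex_Re_le_cmod)
      also have "\<dots> \<le> norm z" using that by simp
      finally show ?thesis by simp
    qed
  qed auto
  then show ?thesis by (simp add: mult.commute)
qed

lemma norm_infsum_le:
  fixes u :: "'a \<Rightarrow> 'b::banach"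
  assumes "b summable_on S" "\<And>e. e \<in> S \<Longrightarrow> norm (u e) \<le> b e"
  shows "u summable_on S" "norm (infsum u S) \<le> infsum b S"
proof -
  have ns: "(\<lambda>e. norm (u e)) summable_on S"
    by (rule Infinite_Sum.abs_summable_on_comparison_test'[OF assms])
  then show "u summable_on S" by (rule abs_summable_summable)
  have "norm (infsum u S) \<le> infsum (\<lambda>e. norm (u e)) S" by (rule norm_infsum_bound[OF ns])
  also have "\<dots> \<le> infsum b S" by (rule infsum_mono[OF ns assms(1)]) (rule assms(2))
  finally show "norm (infsum u S) \<le> infsum b S" .
qed

lemma infsum_diff_banach:
  fixes u v :: "'a \<Rightarrow> 'b::banach"
  assumes "u summable_on S" "v summable_on S"
  shows "infsum (\<lambda>e. u e - v e) S = infsum u S - infsum v S"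
proof -
  have "infsum (\<lambda>e. u e + - v e) S = infsum u S + infsum (\<lambda>e. - v e) S"
    by (rule infsum_add[OF assms(1)]) (use assms(2) summable_on_uminus in blast)
  then show ?thesis by (simp add: infsum_uminus)
qed

context tsetup
begin

abbreviation "V \<equiv> holder_space A \<alpha>"

lemma holderD:
  assumes "holder_type A \<alpha> G"
  shows "\<exists>C. \<forall>n \<rho> \<rho>'. n \<ge> 1 \<longrightarrow> \<rho> \<in> X \<longrightarrow> \<rho>' \<in> X \<longrightarrow> (\<forall>i<n. \<rho> i = \<rho>' i) \<longrightarrow>
              norm (G \<rho> - G \<rho>') \<le> C * exp (- (\<alpha> * (real n - 1)))"
proof -
  obtain C where C: "\<forall>n\<ge>1. \<forall>\<rho>\<in>X. \<forall>\<rho>'\<in>X. (\<forall>i<n. \<rho> i = \<rho>' i) \<longrightarrow> norm (G \<rho> - G \<rho>') * exp (\<alpha> * (real n - 1)) \<le> C"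
    using assms unfolding holder_type_def by blast
  show ?thesis
  proof (intro exI allI impI)
    fix n \<rho> \<rho>' assume h: "n \<ge> 1" "\<rho> \<in> X" "\<rho>' \<in> X" "\<forall>i<n. \<rho> i = \<rho>' i"
    have "norm (G \<rho> - G \<rho>') = norm (G \<rho> - G \<rho>') * exp (\<alpha> * (real n - 1)) * exp (- (\<alpha> * (real n - 1)))"
      by (simp add: exp_minus)
    also have "\<dots> \<le> C * exp (- (\<alpha> * (real n - 1)))"
      using C h by (intro mult_right_mono) auto
    finally show "norm (G \<rho> - G \<rho>') \<le> C * exp (- (\<alpha> * (real n - 1)))" .
  qed
qed

lemma holderI:
  assumes "\<And>n \<rho> \<rho>'. n \<ge> 1 \<Longrightarrow> \<rho> \<in> X \<Longrightarrow> \<rho>' \<in> X \<Longrightarrow> (\<forall>i<n. \<rho> i = \<rho>' i) \<Longrightarrow>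
              norm (G \<rho> - G \<rho>') \<le> C * exp (- (\<alpha> * (real n - 1)))"
  shows "holder_type A \<alpha> G"
  unfolding holder_type_def
proof (intro exI allI impI ballI)
  fix n \<rho> \<rho>' assume h: "n \<ge> 1" "\<rho> \<in> X" "\<rho>' \<in> X" "\<forall>i<n. \<rho> i = \<rho>' i"
  have "norm (G \<rho> - G \<rho>') * exp (\<alpha> * (real n - 1)) \<le> C * exp (- (\<alpha> * (real n - 1))) * exp (\<alpha> * (real n - 1))"
    using assms[OF h] by (intro mult_right_mono) auto
  also have "\<dots> = C" by (simp add: exp_minus)
  finally show "norm (G \<rho> - G \<rho>') * exp (\<alpha> * (real n - 1)) \<le> C" .
qed

lemma V_zero: "G \<in> V \<Longrightarrow> \<rho> \<notin> X \<Longrightarrow> G \<rho> = 0"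
  by (simp add: holder_space_def)

lemma V_bound: "G \<in> V \<Longrightarrow> \<exists>B. \<forall>\<tau>\<in>X. norm (G \<tau>) \<le> B"
  unfolding holder_space_def bounded_iff by auto

lemma V_holder: "G \<in> V \<Longrightarrow> holder_type A \<alpha> G"
  by (simp add: holder_space_def)

lemma V_I:
  assumes "\<And>\<rho>. \<rho> \<notin> X \<Longrightarrow> G \<rho> = 0" "\<exists>B. \<forall>\<tau>\<in>X. norm (G \<tau>) \<le> B" "holder_type A \<alpha> G"
  shows "G \<in> V"
  unfolding holder_space_def bounded_iff using assms by blast

lemma V_lin:
  assumes "G1 \<in> V" "G2 \<in> V"
  shows "(\<lambda>\<tau>. a * G1 \<tau> + b * G2 \<tau>) \<in> V"
proof (rule V_I)
  show "\<And>\<rho>. \<rho> \<notin> X \<Longrightarrow> a * G1 \<rho> + b * G2 \<rho> = 0" by (simp add: V_zero[OF assms(1)] V_zero[OF assms(2)])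
  obtain B1 B2 where B1: "\<forall>\<tau>\<in>X. norm (G1 \<tau>) \<le> B1" and B2: "\<forall>\<tau>\<in>X. norm (G2 \<tau>) \<le> B2"
    using V_bound assms by blast
  have "norm (a * G1 \<tau> + b * G2 \<tau>) \<le> norm a * B1 + norm b * B2" if "\<tau> \<in> X" for \<tau>
  proof -
    have "norm (a * G1 \<tau> + b * G2 \<tau>) \<le> norm a * norm (G1 \<tau>) + norm b * norm (G2 \<tau>)"
      by (metis norm_mult norm_triangle_ineq)
    also have "\<dots> \<le> norm a * B1 + norm b * B2"
      using B1 B2 that by (intro add_mono mult_left_mono) auto
    finally show ?thesis .
  qed
  then show "\<exists>B. \<forall>\<tau>\<in>X. norm (a * G1 \<tau> + b * G2 \<tau>) \<le> B" by blast
  obtain C1 C2 where C1: "\<forall>n \<rho> \<rho>'. n \<ge> 1 \<longrightarrow> \<rho> \<in> X \<longrightarrow> \<rho>' \<in> X \<longrightarrow> (\<forall>i<n. \<rho> i = \<rho>' i) \<longrightarrow>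
              norm (G1 \<rho> - G1 \<rho>') \<le> C1 * exp (- (\<alpha> * (real n - 1)))"
    and C2: "\<forall>n \<rho> \<rho>'. n \<ge> 1 \<longrightarrow> \<rho> \<in> X \<longrightarrow> \<rho>' \<in> X \<longrightarrow> (\<forall>i<n. \<rho> i = \<rho>' i) \<longrightarrow>
              norm (G2 \<rho> - G2 \<rho>') \<le> C2 * exp (- (\<alpha> * (real n - 1)))"
    using holderD[OF V_holder[OF assms(1)]] holderD[OF V_holder[OF assms(2)]] by blast
  show "holder_type A \<alpha> (\<lambda>\<tau>. a * G1 \<tau> + b * G2 \<tau>)"
  proof (rule holderI)
    fix n \<rho> \<rho>' assume h: "1 \<le> n" "\<rho> \<in> X" "\<rho>' \<in> X" "\<forall>i<n. \<rho> i = \<rho>' i"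
    have "norm (a * G1 \<rho> + b * G2 \<rho> - (a * G1 \<rho>' + b * G2 \<rho>')) = norm (a * (G1 \<rho> - G1 \<rho>') + b * (G2 \<rho> - G2 \<rho>'))"
      by (simp add: algebra_simps)
    also have "\<dots> \<le> norm a * norm (G1 \<rho> - G1 \<rho>') + norm b * norm (G2 \<rho> - G2 \<rho>')"
      by (metis norm_mult norm_triangle_ineq)
    also have "\<dots> \<le> norm a * (C1 * exp (- (\<alpha> * (real n - 1)))) + norm b * (C2 * exp (- (\<alpha> * (real n - 1))))"
      using C1 C2 h by (intro add_mono mult_left_mono) auto
    also have "\<dots> = (norm a * C1 + norm b * C2) * exp (- (\<alpha> * (real n - 1)))" by (simp add: algebra_simps)
    finally show "norm (a * G1 \<rho> + b * G2 \<rho> - (a * G1 \<rho>' + b * G2 \<rho>')) \<le> (norm a * C1 + norm b * C2) * exp (- (\<alpha> * (real n - 1)))" .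
  qed
qed

lemma V_cmod: "G \<in> V \<Longrightarrow> (\<lambda>\<tau>. complex_of_real (cmod (G \<tau>))) \<in> V"
proof -
  assume G: "G \<in> V"
  obtain B where B: "\<forall>\<tau>\<in>X. norm (G \<tau>) \<le> B" using V_bound[OF G] by blast
  obtain C where C: "\<forall>n \<rho> \<rho>'. n \<ge> 1 \<longrightarrow> \<rho> \<in> X \<longrightarrow> \<rho>' \<in> X \<longrightarrow> (\<forall>i<n. \<rho> i = \<rho>' i) \<longrightarrow>
              norm (G \<rho> - G \<rho>') \<le> C * exp (- (\<alpha> * (real n - 1)))"
    using holderD[OF V_holder[OF G]] by blast
  show ?thesis
  proof (rule V_I)
    show "\<And>\<rho>. \<rho> \<notin> X \<Longrightarrow> complex_of_real (cmod (G \<rho>)) = 0" by (simp add: V_zero[OF G])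
    show "\<exists>B. \<forall>\<tau>\<in>X. norm (complex_of_real (cmod (G \<tau>))) \<le> B" using B by auto
    show "holder_type A \<alpha> (\<lambda>\<tau>. complex_of_real (cmod (G \<tau>)))"
    proof (rule holderI)
      fix n \<rho> \<rho>' assume h: "1 \<le> n" "\<rho> \<in> X" "\<rho>' \<in> X" "\<forall>i<n. \<rho> i = \<rho>' i"
      have "norm (complex_of_real (cmod (G \<rho>)) - complex_of_real (cmod (G \<rho>'))) = \<bar>cmod (G \<rho>) - cmod (G \<rho>')\<bar>"
        by (metis norm_of_real of_real_diff)
      also have "\<dots> \<le> norm (G \<rho> - G \<rho>')" by (rule norm_triangle_ineq3)
      also have "\<dots> \<le> C * exp (- (\<alpha> * (real n - 1)))" using C h by blast
      finally show "norm (complex_of_real (cmod (G \<rho>)) - complex_of_real (cmod (G \<rho>'))) \<le> C * exp (- (\<alpha> * (real n - 1)))" .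
    qed
  qed
qed

lemma norm_exp_s: "Re s = x \<Longrightarrow> norm (exp (s * complex_of_real (f \<tau>))) = exp (g \<tau>)"
  by (simp add: g_def)

lemma T_basic:
  assumes s: "Re s = x" and r: "\<rho> \<in> X" and H: "\<forall>\<tau>\<in>X. norm (G \<tau>) \<le> H"
  shows "(\<lambda>e. exp (s * complex_of_real (f (seq_cons e \<rho>))) * G (seq_cons e \<rho>)) summable_on {e. A e (\<rho> 0)}"
    and "norm (transfer_op A f s G \<rho>) \<le> R (\<lambda>\<tau>. norm (G \<tau>)) \<rho>"
proof -
  have bH: "bX (\<lambda>\<tau>. norm (G \<tau>))" unfolding bX_def using H by auto
  have nb: "norm (exp (s * complex_of_real (f (seq_cons e \<rho>))) * G (seq_cons e \<rho>)) \<le> exp (g (seq_cons e \<rho>)) * norm (G (seq_cons e \<rho>))" for e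
    using norm_exp_s[OF s] by (simp add: norm_mult)
  have rs: "(\<lambda>e. exp (g (seq_cons e \<rho>)) * norm (G (seq_cons e \<rho>))) summable_on {e. A e (\<rho> 0)}"
    by (rule R_summ[OF r bH])
  show "(\<lambda>e. exp (s * complex_of_real (f (seq_cons e \<rho>))) * G (seq_cons e \<rho>)) summable_on {e. A e (\<rho> 0)}"
    by (rule norm_infsum_le(1)[OF rs nb])
  show "norm (transfer_op A f s G \<rho>) \<le> R (\<lambda>\<tau>. norm (G \<tau>)) \<rho>"
    unfolding transfer_op_def R_def using r norm_infsum_le(2)[OF rs nb] by simp
qed

lemma T_out: "\<rho> \<notin> X \<Longrightarrow> transfer_op A f s G \<rho> = 0"
  by (simp add: transfer_op_def)

lemma T_cong:
  assumes "\<forall>\<tau>\<in>X. G1 \<tau> = G2 \<tau>"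
  shows "transfer_op A f s G1 \<rho> = transfer_op A f s G2 \<rho>"
  unfolding transfer_op_def
  by (auto intro!: infsum_cong simp: assms seq_cons_X)

lemma T_lin:
  assumes s: "Re s = x" and H1: "\<forall>\<tau>\<in>X. norm (G1 \<tau>) \<le> H1" and H2: "\<forall>\<tau>\<in>X. norm (G2 \<tau>) \<le> H2"
  shows "transfer_op A f s (\<lambda>\<tau>. a * G1 \<tau> + b * G2 \<tau>) \<rho> = a * transfer_op A f s G1 \<rho> + b * transfer_op A f s G2 \<rho>"
proof (cases "\<rho> \<in> X")
  case False then show ?thesis by (simp add: T_out)
next
  case True
  note s1 = T_basic(1)[OF s True H1] and s2 = T_basic(1)[OF s True H2]
  have "transfer_op A f s (\<lambda>\<tau>. a * G1 \<tau> + b * G2 \<tau>) \<rho> =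
     (\<Sum>\<^sub>\<infinity>e\<in>{e. A e (\<rho> 0)}. a * (exp (s * complex_of_real (f (seq_cons e \<rho>))) * G1 (seq_cons e \<rho>)) +
          b * (exp (s * complex_of_real (f (seq_cons e \<rho>))) * G2 (seq_cons e \<rho>)))"
    unfolding transfer_op_def using True by (simp add: algebra_simps)
  also have "\<dots> = (\<Sum>\<^sub>\<infinity>e\<in>{e. A e (\<rho> 0)}. a * (exp (s * complex_of_real (f (seq_cons e \<rho>))) * G1 (seq_cons e \<rho>))) +
          (\<Sum>\<^sub>\<infinity>e\<in>{e. A e (\<rho> 0)}. b * (exp (s * complex_of_real (f (seq_cons e \<rho>))) * G2 (seq_cons e \<rho>)))"
    by (rule infsum_add) (use s1 s2 summable_on_cmult_right in blast)+
  also have "\<dots> = a * transfer_op A f s G1 \<rho> + b * transfer_op A f s G2 \<rho>"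
    unfolding transfer_op_def using True by (simp add: infsum_cmult_right')
  finally show ?thesis .
qed

lemma T_in_V:
  assumes s: "Re s = x" and G: "G \<in> V"
  shows "transfer_op A f s G \<in> V"
proof -
  obtain B where B: "\<forall>\<tau>\<in>X. norm (G \<tau>) \<le> B" using V_bound[OF G] by blast
  have B0: "0 \<le> B" using B pip_X by (meson norm_ge_zero order_trans)
  obtain C where C: "\<forall>n \<rho> \<rho>'. n \<ge> 1 \<longrightarrow> \<rho> \<in> X \<longrightarrow> \<rho>' \<in> X \<longrightarrow> (\<forall>i<n. \<rho> i = \<rho>' i) \<longrightarrow>
              norm (G \<rho> - G \<rho>') \<le> C * exp (- (\<alpha> * (real n - 1)))"
    using holderD[OF V_holder[OF G]] by blast
  have C0: "0 \<le> C" using C[rule_format, of 1 pip pip] pip_X by simp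
  show ?thesis
  proof (rule V_I)
    show "\<And>\<rho>. \<rho> \<notin> X \<Longrightarrow> transfer_op A f s G \<rho> = 0" by (rule T_out)
    have "norm (transfer_op A f s G \<tau>) \<le> B * Sig0" if t: "\<tau> \<in> X" for \<tau>
    proof -
      have "norm (transfer_op A f s G \<tau>) \<le> R (\<lambda>\<tau>. norm (G \<tau>)) \<tau>" by (rule T_basic(2)[OF s t B])
      also have "\<dots> \<le> B * Sig0" using R_bound[of "\<lambda>\<tau>. norm (G \<tau>)" B] B t by auto
      finally show ?thesis .
    qed
    then show "\<exists>B. \<forall>\<tau>\<in>X. norm (transfer_op A f s G \<tau>) \<le> B" by blast
    define K where "K = C + cmod s * Cf * exp (cmod s * Cf) * B"
    have K0: "0 \<le> K" unfolding K_def using C0 B0 Cf_nonneg by simp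
    show "holder_type A \<alpha> (transfer_op A f s G)"
    proof (rule holderI[where C = "K * Sig0"])
      fix n \<rho> \<rho>' assume h: "1 \<le> n" "\<rho> \<in> X" "\<rho>' \<in> X" "\<forall>i<n. \<rho> i = \<rho>' i"
      have r0: "\<rho>' 0 = \<rho> 0" using h by auto
      define ee where "ee = exp (- (\<alpha> * real n))"
      have ee0: "0 \<le> ee" unfolding ee_def by simp
      have ee1: "ee \<le> exp (- (\<alpha> * (real n - 1)))" unfolding ee_def using alpha_pos by simp
      have ee2: "ee \<le> 1" unfolding ee_def using alpha_pos by simp
      let ?u = "\<lambda>e. exp (s * complex_of_real (f (seq_cons e \<rho>))) * G (seq_cons e \<rho>)"
      let ?v = "\<lambda>e. exp (s * complex_of_real (f (seq_cons e \<rho>'))) * G (seq_cons e \<rho>')"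
      have su: "?u summable_on {e. A e (\<rho> 0)}" by (rule T_basic(1)[OF s h(2) B])
      have sv: "?v summable_on {e. A e (\<rho> 0)}" using T_basic(1)[OF s h(3) B] r0 by simp
      have tb: "norm (?u e - ?v e) \<le> K * ee * exp (Fsup e)" if e: "e \<in> {e. A e (\<rho> 0)}" for e
      proof -
        have X1: "seq_cons e \<rho> \<in> X" using e h(2) seq_cons_X by auto
        have X2: "seq_cons e \<rho>' \<in> X" using e h(3) r0 seq_cons_X by auto
        have ag: "\<forall>i<Suc n. seq_cons e \<rho> i = seq_cons e \<rho>' i"
          using h(4) by (auto simp: seq_cons_def split: nat.split)
        have dG: "norm (G (seq_cons e \<rho>) - G (seq_cons e \<rho>')) \<le> C * ee"
        proof -
          have "norm (G (seq_cons e \<rho>) - G (seq_cons e \<rho>')) \<le> C * exp (- (\<alpha> * (real (Suc n) - 1)))"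
            by (rule C[rule_format, OF _ X1 X2]) (use ag in auto)
          then show ?thesis unfolding ee_def by simp
        qed
        have df: "\<bar>f (seq_cons e \<rho>) - f (seq_cons e \<rho>')\<bar> \<le> Cf * ee"
          using f_holder[OF _ X1 X2 ag] unfolding ee_def by simp
        have df1: "\<bar>f (seq_cons e \<rho>) - f (seq_cons e \<rho>')\<bar> \<le> Cf" using df ee2 Cf_nonneg
          by (meson mult_left_le order_trans)
        have gF1: "exp (g (seq_cons e \<rho>)) \<le> exp (Fsup e)" using Fsup_upper[OF seq_cons_cyl[OF h(2)]] e by auto
        have gF2: "exp (g (seq_cons e \<rho>')) \<le> exp (Fsup e)" using Fsup_upper[OF seq_cons_cyl[OF h(3)]] e r0 by auto
        define z where "z = s * complex_of_real (f (seq_cons e \<rho>) - f (seq_cons e \<rho>'))"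
        have nz: "norm z \<le> cmod s * (Cf * ee)" unfolding z_def norm_mult norm_of_real by (rule mult_left_mono[OF df]) simp
        have nz1: "norm z \<le> cmod s * Cf" unfolding z_def norm_mult norm_of_real by (rule mult_left_mono[OF df1]) simp
        have ea: "exp (s * complex_of_real (f (seq_cons e \<rho>))) = exp (s * complex_of_real (f (seq_cons e \<rho>'))) * exp z"
          unfolding z_def by (simp add: exp_add[symmetric] algebra_simps)
        have da: "norm (exp (s * complex_of_real (f (seq_cons e \<rho>))) - exp (s * complex_of_real (f (seq_cons e \<rho>'))))
              \<le> exp (Fsup e) * (cmod s * (Cf * ee) * exp (cmod s * Cf))"
        proof -
          have "norm (exp (s * complex_of_real (f (seq_cons e \<rho>))) - exp (s * complex_of_real (f (seq_cons e \<rho>'))))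
               = exp (g (seq_cons e \<rho>')) * norm (exp z - 1)"
          proof -
            have "exp (s * complex_of_real (f (seq_cons e \<rho>))) - exp (s * complex_of_real (f (seq_cons e \<rho>')))
                = exp (s * complex_of_real (f (seq_cons e \<rho>'))) * (exp z - 1)"
              unfolding ea by (simp add: algebra_simps)
            then show ?thesis using norm_exp_s[OF s, of "seq_cons e \<rho>'"] by (simp add: norm_mult)
          qed
          also have "\<dots> \<le> exp (Fsup e) * (norm z * exp (norm z))"
            by (rule mult_mono[OF gF2 norm_exp_minus_one]) auto
          also have "\<dots> \<le> exp (Fsup e) * (cmod s * (Cf * ee) * exp (cmod s * Cf))"
            using nz nz1 Cf_nonneg ee0 by (intro mult_left_mono mult_mono) auto
          finally show ?thesis .
        qed
        have "?u e - ?v e = exp (s * complex_of_real (f (seq_cons e \<rho>))) * (G (seq_cons e \<rho>) - G (seq_cons e \<rho>'))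
             + (exp (s * complex_of_real (f (seq_cons e \<rho>))) - exp (s * complex_of_real (f (seq_cons e \<rho>')))) * G (seq_cons e \<rho>')"
          by (simp add: algebra_simps)
        then have "norm (?u e - ?v e) \<le> exp (g (seq_cons e \<rho>)) * norm (G (seq_cons e \<rho>) - G (seq_cons e \<rho>'))
             + norm (exp (s * complex_of_real (f (seq_cons e \<rho>))) - exp (s * complex_of_real (f (seq_cons e \<rho>')))) * norm (G (seq_cons e \<rho>'))"
          using norm_exp_s[OF s] by (metis norm_mult norm_triangle_ineq)
        also have "\<dots> \<le> exp (Fsup e) * (C * ee) + exp (Fsup e) * (cmod s * (Cf * ee) * exp (cmod s * Cf)) * B"
          using gF1 dG da B X2 Cf_nonneg ee0 by (intro add_mono mult_mono) auto
        also have "\<dots> = K * ee * exp (Fsup e)" unfolding K_def by (simp add: algebra_simps)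
        finally show ?thesis .
      qed
      have sb: "(\<lambda>e. K * ee * exp (Fsup e)) summable_on {e. A e (\<rho> 0)}"
        by (rule summable_on_cmult_right[OF Fsup_summable_A(1)[OF h(2)]])
      have "norm (transfer_op A f s G \<rho> - transfer_op A f s G \<rho>') = norm (infsum (\<lambda>e. ?u e - ?v e) {e. A e (\<rho> 0)})"
        unfolding transfer_op_def using h(2) h(3) r0 by (simp add: infsum_diff_banach[OF su sv])
      also have "\<dots> \<le> infsum (\<lambda>e. K * ee * exp (Fsup e)) {e. A e (\<rho> 0)}"
        by (rule norm_infsum_le(2)[OF sb tb])
      also have "\<dots> = K * ee * infsum (\<lambda>e. exp (Fsup e)) {e. A e (\<rho> 0)}" by (rule infsum_cmult_right')
      also have "\<dots> \<le> K * ee * Sig0"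
        using Fsup_summable_A(2)[OF h(2)] K0 ee0 by (intro mult_left_mono) auto
      also have "\<dots> \<le> K * Sig0 * exp (- (\<alpha> * (real n - 1)))"
      proof -
        have "K * Sig0 * ee \<le> K * Sig0 * exp (- (\<alpha> * (real n - 1)))"
          using ee1 K0 Sig0_nonneg by (intro mult_left_mono) auto
        then show ?thesis by (simp add: ac_simps)
      qed
      finally show "norm (transfer_op A f s G \<rho> - transfer_op A f s G \<rho>') \<le> K * Sig0 * exp (- (\<alpha> * (real n - 1)))" .
    qed
  qed
qed

lemma R_link:
  assumes r: "\<rho> \<in> X" and b: "bX h"
  shows "transfer_op A f (complex_of_real x) (\<lambda>\<tau>. complex_of_real (h \<tau>)) \<rho> = complex_of_real (R h \<rho>)"
proof -
  have "transfer_op A f (complex_of_real x) (\<lambda>\<tau>. complex_of_real (h \<tau>)) \<rho> =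
        infsum (complex_of_real \<circ> (\<lambda>e. exp (g (seq_cons e \<rho>)) * h (seq_cons e \<rho>))) {e. A e (\<rho> 0)}"
    unfolding transfer_op_def using r by (simp add: g_def exp_of_real[symmetric] o_def)
  also have "\<dots> = complex_of_real (R h \<rho>)"
    unfolding R_def
    by (rule infsum_comm_additive_general) (auto simp: R_summ[OF r b])
  finally show ?thesis .
qed

end


lemma exp_small:
  assumes a: "(\<alpha>::real) > 0" and e: "\<epsilon> > 0"
  shows "\<exists>N\<ge>1. K * exp (- (\<alpha> * (real N - 1))) \<le> \<epsilon>"
proof -
  have q: "norm (exp (- \<alpha>)) < 1" using a by simp
  have "(\<lambda>n. (K * exp \<alpha>) * exp (- \<alpha>) ^ n) \<longlonglongrightarrow> 0"
    by (rule tendsto_mult_right_zero[OF LIMSEQ_power_zero[OF q]])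
  then have "\<forall>\<^sub>F n in sequentially. (K * exp \<alpha>) * exp (- \<alpha>) ^ n < \<epsilon>"
    using e by (simp add: order_tendsto_iff)
  then obtain N0 where N0: "\<And>n. n \<ge> N0 \<Longrightarrow> (K * exp \<alpha>) * exp (- \<alpha>) ^ n < \<epsilon>"
    unfolding eventually_sequentially by blast
  define N where "N = max N0 1"
  have eq: "exp (- (\<alpha> * (real N - 1))) = exp \<alpha> * exp (- \<alpha>) ^ N"
  proof -
    have "exp (- \<alpha>) ^ N = exp (real N * (- \<alpha>))" by (rule exp_of_nat_mult[symmetric])
    then show ?thesis by (simp add: exp_add[symmetric] algebra_simps)
  qed
  have NN0: "N \<ge> N0" "N \<ge> 1" by (auto simp: N_def)
  have "K * exp (- (\<alpha> * (real N - 1))) = (K * exp \<alpha>) * exp (- \<alpha>) ^ N" by (simp add: eq)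
  also have "\<dots> < \<epsilon>" by (rule N0[OF NN0(1)])
  finally show ?thesis using NN0(2) by (intro exI[of _ N]) auto
qed

context tsetup
begin

definition "Lsum = sum length Om"
definition "lam = exp Pr"

lemma lam_pos: "lam > 0" by (simp add: lam_def)

lemma harnack:
  assumes nn: "\<forall>\<tau>\<in>X. 0 \<le> h \<tau>" and b: "bX h" and rs: "\<rho>s \<in> X" and N: "N \<ge> 1" and d: "\<delta> > 0"
    and hd: "\<forall>\<tau>\<in>X. (\<forall>i<N. \<tau> i = \<rho>s i) \<longrightarrow> \<delta> \<le> h \<tau>"
  shows "\<exists>c>0. \<forall>\<tau>\<in>X. \<exists>m\<le>N + Lsum. c \<le> (R ^^ m) h \<tau>"
proof -
  define u where "u = map \<rho>s [0..<N]"
  have lu: "length u = N" by (simp add: u_def)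
  have une: "u \<noteq> []" using N lu by auto
  have uc: "\<rho>s \<in> cylinder A u" unfolding u_def using rs by (simp add: cylinder_iff)
  have uadm: "admissible_word A u" by (rule cylinder_adm_word[OF uc])
  define K where "K = (\<Sum>\<omega>\<in>Om. \<Sum>j<length (u @ \<omega>). \<bar>Fsup ((u @ \<omega>) ! j) - Cg\<bar>)"
  define c where "c = \<delta> * exp (- K)"
  have c0: "c > 0" unfolding c_def using d by simp
  have "\<forall>\<tau>\<in>X. \<exists>m\<le>N + Lsum. c \<le> (R ^^ m) h \<tau>"
  proof
    fix \<tau> assume t: "\<tau> \<in> X"
    obtain \<omega> where om: "\<omega> \<in> Om" and oadm: "admissible_word A (last u # \<omega> @ [\<tau> 0])"
      using Om(2) by blast
    define w where "w = u @ \<omega>"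
    have wadm: "admissible_word A (w @ [\<tau> 0])"
      unfolding w_def using admissible_word_append_link[OF uadm une, of "\<omega> @ [\<tau> 0]"] oadm by simp
    have pX: "pre w \<tau> \<in> X" using wadm t by (simp add: adm_pre)
    have pc: "pre w \<tau> \<in> cylinder A w" by (rule pre_in_cylinder[OF pX])
    have agree: "\<forall>i<N. pre w \<tau> i = \<rho>s i"
      unfolding w_def using lu by (auto simp: pre_def nth_append u_def)
    have hpw: "\<delta> \<le> h (pre w \<tau>)" using hd pX agree by blast
    have "- K \<le> - (\<Sum>j<length w. \<bar>Fsup (w ! j) - Cg\<bar>)"
    proof -
      have "(\<Sum>j<length w. \<bar>Fsup (w ! j) - Cg\<bar>) \<le> K"
        unfolding K_def w_def
        by (rule member_le_sum[of \<omega> Om "\<lambda>\<omega>. \<Sum>j<length (u @ \<omega>). \<bar>Fsup ((u @ \<omega>) ! j) - Cg\<bar>"])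
           (use om Om(1) in auto)
      then show ?thesis by simp
    qed
    also have "\<dots> \<le> (\<Sum>j<length w. Fsup (w ! j) - Cg)"
    proof -
      have "(\<Sum>j<length w. - \<bar>Fsup (w ! j) - Cg\<bar>) \<le> (\<Sum>j<length w. Fsup (w ! j) - Cg)"
        by (rule sum_mono) simp
      then show ?thesis by (simp add: sum_negf)
    qed
    also have "\<dots> \<le> birkhoff_sum (length w) g (pre w \<tau>)" by (rule S_bounds(2)[OF pc])
    finally have SK: "- K \<le> birkhoff_sum (length w) g (pre w \<tau>)" .
    have "c \<le> exp (birkhoff_sum (length w) g (pre w \<tau>)) * h (pre w \<tau>)"
      unfolding c_def using SK hpw d by (simp add: mult.commute mult_mono)
    also have "\<dots> \<le> (R ^^ length w) h \<tau>" by (rule Rn_word[OF nn b t pX])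
    finally have "c \<le> (R ^^ length w) h \<tau>" .
    moreover have "length w \<le> N + Lsum"
    proof -
      have "length \<omega> \<le> Lsum" unfolding Lsum_def by (rule member_le_sum) (use om Om(1) in auto)
      then show ?thesis unfolding w_def using lu by simp
    qed
    ultimately show "\<exists>m\<le>N + Lsum. c \<le> (R ^^ m) h \<tau>" by blast
  qed
  then show ?thesis using c0 by blast
qed

lemma cont_point:
  assumes hol: "\<And>n \<rho> \<rho>'. n \<ge> 1 \<Longrightarrow> \<rho> \<in> X \<Longrightarrow> \<rho>' \<in> X \<Longrightarrow> (\<forall>i<n. \<rho> i = \<rho>' i) \<Longrightarrow>
            \<bar>h \<rho> - h \<rho>'\<bar> \<le> C * exp (- (\<alpha> * (real n - 1)))"
    and rs: "\<rho>s \<in> X" and pos: "h \<rho>s > 0"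
  shows "\<exists>N\<ge>1. \<forall>\<tau>\<in>X. (\<forall>i<N. \<tau> i = \<rho>s i) \<longrightarrow> h \<rho>s / 2 \<le> h \<tau>"
proof -
  obtain N where N: "N \<ge> 1" "C * exp (- (\<alpha> * (real N - 1))) \<le> h \<rho>s / 2"
    using exp_small[OF alpha_pos, of "h \<rho>s / 2" C] pos by auto
  have "\<forall>\<tau>\<in>X. (\<forall>i<N. \<tau> i = \<rho>s i) \<longrightarrow> h \<rho>s / 2 \<le> h \<tau>"
  proof (intro ballI impI)
    fix \<tau> assume t: "\<tau> \<in> X" "\<forall>i<N. \<tau> i = \<rho>s i"
    have "\<bar>h \<tau> - h \<rho>s\<bar> \<le> C * exp (- (\<alpha> * (real N - 1)))" by (rule hol[OF N(1) t(1) rs t(2)])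
    then show "h \<rho>s / 2 \<le> h \<tau>" using N(2) by linarith
  qed
  then show ?thesis using N(1) by blast
qed

lemma Rn_eig:
  assumes b: "bX h" and eig: "\<forall>\<rho>\<in>X. R h \<rho> = c * h \<rho>"
  shows "\<forall>\<rho>\<in>X. (R ^^ m) h \<rho> = c ^ m * h \<rho>"
proof (induction m)
  case 0 then show ?case by simp
next
  case (Suc m)
  show ?case
  proof
    fix \<rho> assume r: "\<rho> \<in> X"
    have "(R ^^ Suc m) h \<rho> = (R ^^ m) (R h) \<rho>" by (simp add: funpow_Suc_right del: funpow.simps)
    also have "\<dots> = (R ^^ m) (\<lambda>\<tau>. c * h \<tau>) \<rho>" using Rn_cong[of "R h" "\<lambda>\<tau>. c * h \<tau>" m] eig r by auto
    also have "\<dots> = c * (R ^^ m) h \<rho>" by (simp add: Rn_cmult)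
    also have "\<dots> = c ^ Suc m * h \<rho>" using Suc r by simp
    finally show "(R ^^ Suc m) h \<rho> = c ^ Suc m * h \<rho>" .
  qed
qed

end


context tsetup
begin

lemma peripheral:
  assumes s: "Re s = x" and phiV: "\<phi> \<in> V" and nz: "\<exists>\<rho>\<in>X. \<phi> \<rho> \<noteq> 0"
    and eig: "\<forall>\<rho>\<in>X. transfer_op A f s \<phi> \<rho> = \<mu> * \<phi> \<rho>" and mu: "cmod \<mu> = lam"
  shows "\<forall>\<rho>\<in>X. R (\<lambda>\<tau>. cmod (\<phi> \<tau>)) \<rho> = lam * cmod (\<phi> \<rho>)"
    and "\<exists>\<delta>>0. \<forall>\<rho>\<in>X. \<delta> \<le> cmod (\<phi> \<rho>)"
proof -
  define v where "v = (\<lambda>\<tau>. cmod (\<phi> \<tau>))"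
  obtain Bv where Bv: "\<forall>\<tau>\<in>X. norm (\<phi> \<tau>) \<le> Bv" using V_bound[OF phiV] by blast
  have vb: "\<forall>\<tau>\<in>X. \<bar>v \<tau>\<bar> \<le> Bv" using Bv by (simp add: v_def)
  have bv: "bX v" unfolding bX_def using vb by blast
  have vnn: "\<forall>\<tau>\<in>X. 0 \<le> v \<tau>" by (simp add: v_def)
  obtain \<rho>1 where r1: "\<rho>1 \<in> X" and v1: "v \<rho>1 > 0" using nz by (auto simp: v_def)
  have Bvpos: "Bv > 0" using vb r1 v1 by force
  have lam0: "lam > 0" by (rule lam_pos)
  have sub: "lam * v \<rho> \<le> R v \<rho>" if r: "\<rho> \<in> X" for \<rho>
  proof -
    have "lam * v \<rho> = cmod (transfer_op A f s \<phi> \<rho>)" using eig r mu by (simp add: v_def norm_mult)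
    also have "\<dots> \<le> R v \<rho>" unfolding v_def by (rule T_basic(2)[OF s r Bv])
    finally show ?thesis .
  qed
  obtain Cv where Cv: "\<And>n \<rho> \<rho>'. n \<ge> 1 \<Longrightarrow> \<rho> \<in> X \<Longrightarrow> \<rho>' \<in> X \<Longrightarrow> (\<forall>i<n. \<rho> i = \<rho>' i) \<Longrightarrow>
            \<bar>v \<rho> - v \<rho>'\<bar> \<le> Cv * exp (- (\<alpha> * (real n - 1)))"
  proof -
    obtain C where C: "\<forall>n \<rho> \<rho>'. n \<ge> 1 \<longrightarrow> \<rho> \<in> X \<longrightarrow> \<rho>' \<in> X \<longrightarrow> (\<forall>i<n. \<rho> i = \<rho>' i) \<longrightarrow>
              norm (complex_of_real (cmod (\<phi> \<rho>)) - complex_of_real (cmod (\<phi> \<rho>'))) \<le> C * exp (- (\<alpha> * (real n - 1)))"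
      using holderD[OF V_holder[OF V_cmod[OF phiV]]] by blast
    have "\<bar>v \<rho> - v \<rho>'\<bar> \<le> C * exp (- (\<alpha> * (real n - 1)))"
      if "n \<ge> 1" "\<rho> \<in> X" "\<rho>' \<in> X" "\<forall>i<n. \<rho> i = \<rho>' i" for n \<rho> \<rho>'
    proof -
      have "norm (complex_of_real (cmod (\<phi> \<rho>)) - complex_of_real (cmod (\<phi> \<rho>'))) \<le> C * exp (- (\<alpha> * (real n - 1)))"
        using C that by blast
      then show ?thesis unfolding v_def by (metis norm_of_real of_real_diff)
    qed
    then show ?thesis using that by blast
  qed
  have TV: "transfer_op A f (complex_of_real x) (\<lambda>\<tau>. complex_of_real (v \<tau>)) \<in> V"
    using T_in_V[of "complex_of_real x", OF _ V_cmod[OF phiV]] by (simp add: v_def)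
  obtain CR where CR: "\<And>n \<rho> \<rho>'. n \<ge> 1 \<Longrightarrow> \<rho> \<in> X \<Longrightarrow> \<rho>' \<in> X \<Longrightarrow> (\<forall>i<n. \<rho> i = \<rho>' i) \<Longrightarrow>
            \<bar>R v \<rho> - R v \<rho>'\<bar> \<le> CR * exp (- (\<alpha> * (real n - 1)))"
  proof -
    obtain C where C: "\<forall>n \<rho> \<rho>'. n \<ge> 1 \<longrightarrow> \<rho> \<in> X \<longrightarrow> \<rho>' \<in> X \<longrightarrow> (\<forall>i<n. \<rho> i = \<rho>' i) \<longrightarrow>
              norm (transfer_op A f (complex_of_real x) (\<lambda>\<tau>. complex_of_real (v \<tau>)) \<rho> -
                    transfer_op A f (complex_of_real x) (\<lambda>\<tau>. complex_of_real (v \<tau>)) \<rho>') \<le> C * exp (- (\<alpha> * (real n - 1)))"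
      using holderD[OF V_holder[OF TV]] by blast
    have "\<bar>R v \<rho> - R v \<rho>'\<bar> \<le> C * exp (- (\<alpha> * (real n - 1)))"
      if h: "n \<ge> 1" "\<rho> \<in> X" "\<rho>' \<in> X" "\<forall>i<n. \<rho> i = \<rho>' i" for n \<rho> \<rho>'
    proof -
      have "norm (transfer_op A f (complex_of_real x) (\<lambda>\<tau>. complex_of_real (v \<tau>)) \<rho> -
                    transfer_op A f (complex_of_real x) (\<lambda>\<tau>. complex_of_real (v \<tau>)) \<rho>') \<le> C * exp (- (\<alpha> * (real n - 1)))"
        using C h by blast
      then show ?thesis unfolding R_link[OF h(2) bv] R_link[OF h(3) bv] by (metis norm_of_real of_real_diff)
    qed
    then show ?thesis using that by blast
  qed
  define L where "L = max 1 lam"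
  have L1: "L \<ge> 1" by (simp add: L_def)
  have lamL: "lam ^ m \<le> L ^ M" if "m \<le> M" for m M
  proof -
    have "lam ^ m \<le> L ^ m" using lam0 by (intro power_mono) (auto simp: L_def)
    also have "\<dots> \<le> L ^ M" by (rule power_increasing[OF that L1])
    finally show ?thesis .
  qed
  have eqR: "\<forall>\<rho>\<in>X. R v \<rho> = lam * v \<rho>"
  proof (rule ccontr)
    assume "\<not> (\<forall>\<rho>\<in>X. R v \<rho> = lam * v \<rho>)"
    then obtain \<rho>s where rs: "\<rho>s \<in> X" and ne: "R v \<rho>s \<noteq> lam * v \<rho>s" by blast
    define D where "D = (\<lambda>\<tau>. R v \<tau> / lam - v \<tau>)"
    have Dnn: "\<forall>\<tau>\<in>X. 0 \<le> D \<tau>"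
      using sub lam0 by (auto simp: D_def field_simps)
    have Dpos: "D \<rho>s > 0"
      using sub[OF rs] ne lam0 by (auto simp: D_def field_simps)
    have bD: "bX D"
    proof -
      have "\<forall>\<tau>\<in>X. \<bar>R v \<tau>\<bar> \<le> Bv * Sig0" by (rule R_bound[OF vb])
      have "\<bar>D \<tau>\<bar> \<le> Bv * Sig0 / lam + Bv" if t: "\<tau> \<in> X" for \<tau>
      proof -
        have "\<bar>D \<tau>\<bar> \<le> \<bar>R v \<tau> / lam\<bar> + \<bar>v \<tau>\<bar>" unfolding D_def by (rule abs_triangle_ineq4)
        also have "\<dots> = \<bar>R v \<tau>\<bar> / lam + \<bar>v \<tau>\<bar>" using lam0 by simp
        also have "\<dots> \<le> Bv * Sig0 / lam + Bv"
          using \<open>\<forall>\<tau>\<in>X. \<bar>R v \<tau>\<bar> \<le> Bv * Sig0\<close> vb t lam0 by (intro add_mono divide_right_mono) auto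
        finally show ?thesis .
      qed
      then show ?thesis unfolding bX_def by blast
    qed
    have Dhol: "\<bar>D \<rho> - D \<rho>'\<bar> \<le> (CR / lam + Cv) * exp (- (\<alpha> * (real n - 1)))"
      if h: "n \<ge> 1" "\<rho> \<in> X" "\<rho>' \<in> X" "\<forall>i<n. \<rho> i = \<rho>' i" for n \<rho> \<rho>'
    proof -
      have e1: "D \<rho> - D \<rho>' = (R v \<rho> - R v \<rho>') / lam - (v \<rho> - v \<rho>')"
        unfolding D_def by (simp add: diff_divide_distrib)
      have "\<bar>D \<rho> - D \<rho>'\<bar> \<le> \<bar>(R v \<rho> - R v \<rho>') / lam\<bar> + \<bar>v \<rho> - v \<rho>'\<bar>"
        unfolding e1 by (rule abs_triangle_ineq4)
      also have "\<dots> = \<bar>R v \<rho> - R v \<rho>'\<bar> / lam + \<bar>v \<rho> - v \<rho>'\<bar>" using lam0 by simp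
      finally have "\<bar>D \<rho> - D \<rho>'\<bar> \<le> \<bar>R v \<rho> - R v \<rho>'\<bar> / lam + \<bar>v \<rho> - v \<rho>'\<bar>" .
      also have "\<dots> \<le> CR * exp (- (\<alpha> * (real n - 1))) / lam + Cv * exp (- (\<alpha> * (real n - 1)))"
        using CR[OF h] Cv[OF h] lam0 by (intro add_mono divide_right_mono) auto
      also have "\<dots> = (CR / lam + Cv) * exp (- (\<alpha> * (real n - 1)))" by (simp add: field_simps)
      finally show ?thesis .
    qed
    obtain N where N: "N \<ge> 1" and Nc: "\<forall>\<tau>\<in>X. (\<forall>i<N. \<tau> i = \<rho>s i) \<longrightarrow> D \<rho>s / 2 \<le> D \<tau>"
      using cont_point[of D "CR / lam + Cv" \<rho>s, OF Dhol rs Dpos] by blast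
    obtain c where c0: "c > 0" and cH: "\<forall>\<tau>\<in>X. \<exists>m\<le>N + Lsum. c \<le> (R ^^ m) D \<tau>"
      using harnack[of D \<rho>s N "D \<rho>s / 2", OF Dnn bD rs N _ Nc] Dpos by auto
    define M where "M = N + Lsum + 1"
    have M1: "M \<ge> 1" by (simp add: M_def)
    define hh where "hh i \<tau> = (R ^^ i) v \<tau> / lam ^ i" for i \<tau>
    have RvD: "R v = (\<lambda>\<tau>. lam * (v \<tau> + D \<tau>))"
      by (rule ext) (use lam0 in \<open>simp add: D_def field_simps\<close>)
    have step: "hh (Suc i) \<tau> = hh i \<tau> + (R ^^ i) D \<tau> / lam ^ i" if t: "\<tau> \<in> X" for i \<tau>
    proof -
      have "(R ^^ Suc i) v \<tau> = (R ^^ i) (R v) \<tau>" by (simp add: funpow_Suc_right del: funpow.simps)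
      also have "\<dots> = lam * (R ^^ i) (\<lambda>\<tau>. v \<tau> + D \<tau>) \<tau>" unfolding RvD by (simp add: Rn_cmult)
      also have "\<dots> = lam * ((R ^^ i) v \<tau> + (R ^^ i) D \<tau>)" using Rn_add[OF bv bD, of i] t by simp
      finally show ?thesis unfolding hh_def using lam0 by (simp add: field_simps)
    qed
    have RDnn: "0 \<le> (R ^^ i) D \<tau>" if "\<tau> \<in> X" for i \<tau> using Rn_nonneg[OF Dnn] that by blast
    have hmono: "hh i \<tau> \<le> hh j \<tau>" if t: "\<tau> \<in> X" and ij: "i \<le> j" for i j \<tau>
    proof (rule lift_Suc_mono_le[of "\<lambda>i. hh i \<tau>", OF _ ij])
      fix n show "hh n \<tau> \<le> hh (Suc n) \<tau>" using step[OF t, of n] RDnn[OF t, of n] lam0 by simp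
    qed
    have hh0: "hh 0 \<tau> = v \<tau>" for \<tau> by (simp add: hh_def)
    have key: "v \<tau> + c / L ^ M \<le> hh M \<tau>" if t: "\<tau> \<in> X" for \<tau>
    proof -
      obtain m where m: "m \<le> N + Lsum" and cm: "c \<le> (R ^^ m) D \<tau>" using cH t by blast
      have "c / L ^ M \<le> c / lam ^ m"
      proof (rule divide_left_mono)
        show "lam ^ m \<le> L ^ M" using lamL[of m M] m unfolding M_def by simp
        show "0 \<le> c" using c0 by simp
        show "0 < L ^ M * lam ^ m" using L1 lam0 by simp
      qed
      also have "\<dots> \<le> (R ^^ m) D \<tau> / lam ^ m" using cm lam0 by (intro divide_right_mono) auto
      finally have a: "c / L ^ M \<le> (R ^^ m) D \<tau> / lam ^ m" .
      have "v \<tau> + c / L ^ M \<le> hh m \<tau> + (R ^^ m) D \<tau> / lam ^ m"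
        using a hmono[OF t, of 0 m] hh0 by simp
      also have "\<dots> = hh (Suc m) \<tau>" by (rule step[OF t, symmetric])
      also have "\<dots> \<le> hh M \<tau>" using m unfolding M_def by (intro hmono[OF t]) auto
      finally show ?thesis .
    qed
    define \<eta> where "\<eta> = c / L ^ M / Bv"
    have eta0: "\<eta> > 0" unfolding \<eta>_def using c0 Bvpos L1 by simp
    define q where "q = lam ^ M * (1 + \<eta>)"
    have q0: "q > 0" unfolding q_def using lam0 eta0 by simp
    have key2: "q * v \<tau> \<le> (R ^^ M) v \<tau>" if t: "\<tau> \<in> X" for \<tau>
    proof -
      have "\<eta> * v \<tau> \<le> c / L ^ M"
      proof -
        have "\<eta> * v \<tau> = (c / L ^ M) * (v \<tau> / Bv)" unfolding \<eta>_def by simp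
        also have "\<dots> \<le> (c / L ^ M) * 1"
          using vb t vnn Bvpos c0 L1 by (intro mult_left_mono) (auto simp: field_simps)
        finally show ?thesis by simp
      qed
      then have "(1 + \<eta>) * v \<tau> \<le> hh M \<tau>" using key[OF t] by (simp add: algebra_simps)
      then have "lam ^ M * ((1 + \<eta>) * v \<tau>) \<le> lam ^ M * hh M \<tau>" using lam0 by (intro mult_left_mono) auto
      also have "\<dots> = (R ^^ M) v \<tau>" unfolding hh_def using lam0 by simp
      finally show ?thesis unfolding q_def by (simp add: ac_simps)
    qed
    have iter: "\<forall>\<tau>\<in>X. q ^ k * v \<tau> \<le> (R ^^ (k * M)) v \<tau>" for k
    proof (induction k)
      case 0 then show ?case by simp
    next
      case (Suc k)
      show ?case
      proof
        fix \<tau> assume t: "\<tau> \<in> X"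
        have bq: "bX (\<lambda>\<tau>. q * v \<tau>)" using bv unfolding bX_def
          by (metis abs_mult mult_left_mono abs_ge_zero)
        have "(R ^^ (Suc k * M)) v \<tau> = (R ^^ (k * M + M)) v \<tau>" by (simp add: add.commute)
        also have "\<dots> = (R ^^ (k * M)) ((R ^^ M) v) \<tau>" by (simp only: funpow_add comp_apply)
        finally have e1: "(R ^^ (Suc k * M)) v \<tau> = (R ^^ (k * M)) ((R ^^ M) v) \<tau>" .
        have mono1: "\<forall>\<rho>\<in>X. (R ^^ (k * M)) (\<lambda>\<tau>. q * v \<tau>) \<rho> \<le> (R ^^ (k * M)) ((R ^^ M) v) \<rho>"
          by (rule Rn_mono[OF bq Rn_bX[OF bv]]) (use key2 in blast)
        have "(R ^^ (k * M)) (\<lambda>\<tau>. q * v \<tau>) \<tau> \<le> (R ^^ (Suc k * M)) v \<tau>"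
          unfolding e1 using mono1 t by blast
        moreover have "(R ^^ (k * M)) (\<lambda>\<tau>. q * v \<tau>) \<tau> = q * (R ^^ (k * M)) v \<tau>" by (simp add: Rn_cmult)
        moreover have "q * (q ^ k * v \<tau>) \<le> q * (R ^^ (k * M)) v \<tau>" using Suc t q0 by (intro mult_left_mono) auto
        ultimately show "q ^ Suc k * v \<tau> \<le> (R ^^ (Suc k * M)) v \<tau>" by (simp add: ac_simps)
      qed
    qed
    have growth: "q ^ k * (v \<rho>1 / Bv) \<le> Z (k * M)" for k
    proof -
      have b1: "bX (\<lambda>\<tau>. Bv * 1)" unfolding bX_def by auto
      have "(R ^^ (k * M)) v \<rho>1 \<le> (R ^^ (k * M)) (\<lambda>\<tau>. Bv * 1) \<rho>1"
      proof -
        have vle: "\<forall>\<tau>\<in>X. v \<tau> \<le> Bv * 1" using vb by (auto simp: abs_le_iff)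
        show ?thesis using Rn_mono[OF bv b1 vle, of "k * M"] r1 by blast
      qed
      also have "\<dots> = Bv * (R ^^ (k * M)) (\<lambda>\<tau>. 1) \<rho>1" by (simp add: Rn_cmult[of _ Bv "\<lambda>\<tau>. 1", simplified])
      also have "\<dots> \<le> Bv * Z (k * M)" using Rn1_le_Z[OF r1] Bvpos by (intro mult_left_mono) auto
      finally have "(R ^^ (k * M)) v \<rho>1 \<le> Bv * Z (k * M)" .
      then have "q ^ k * v \<rho>1 \<le> Bv * Z (k * M)" using iter[of k] r1 by (meson order_trans)
      then show ?thesis using Bvpos by (simp add: field_simps)
    qed
    define a where "a = ln (v \<rho>1 / Bv)"
    have lnq: "ln q = real M * Pr + ln (1 + \<eta>)"
      unfolding q_def using lam0 eta0 by (simp add: ln_mult ln_realpow lam_def)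
    have lower: "Pr + ln (1 + \<eta>) / real M + a / (real k * real M) \<le> ln (Z (k * M)) / real (k * M)"
      if k1: "k \<ge> 1" for k
    proof -
      have pos: "0 < q ^ k * (v \<rho>1 / Bv)" using q0 v1 Bvpos by simp
      have "real k * ln q + a = ln (q ^ k * (v \<rho>1 / Bv))"
      proof -
        have "ln (q ^ k * (v \<rho>1 / Bv)) = ln (q ^ k) + ln (v \<rho>1 / Bv)"
          by (rule ln_mult_pos) (use q0 v1 Bvpos in auto)
        also have "ln (q ^ k) = real k * ln q" by (rule ln_realpow)
        finally show ?thesis unfolding a_def by simp
      qed
      also have "\<dots> \<le> ln (Z (k * M))" using growth[of k] pos Z_pos by (simp add: ln_le_cancel_iff)
      finally have "real k * ln q + a \<le> ln (Z (k * M))" .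
      then have "(real k * ln q + a) / (real k * real M) \<le> ln (Z (k * M)) / (real k * real M)"
        using k1 M1 by (intro divide_right_mono) auto
      moreover have "(real k * ln q + a) / (real k * real M) = Pr + ln (1 + \<eta>) / real M + a / (real k * real M)"
        unfolding lnq using k1 M1 by (simp add: field_simps)
      ultimately show ?thesis by simp
    qed
    have lim1: "(\<lambda>k. ln (Z (k * M)) / real (k * M)) \<longlonglongrightarrow> Pr"
    proof -
      have sm: "strict_mono (\<lambda>k. k * M)" using M1 by (auto simp: strict_mono_def)
      show ?thesis using LIMSEQ_subseq_LIMSEQ[OF Z_lim sm] by (simp add: o_def)
    qed
    have lim2: "(\<lambda>k. Pr + ln (1 + \<eta>) / real M + a / (real k * real M)) \<longlonglongrightarrow> Pr + ln (1 + \<eta>) / real M + 0"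
    proof (intro tendsto_add tendsto_const)
      have "(\<lambda>k. (a / real M) / real k) \<longlonglongrightarrow> 0" by (rule lim_const_over_n)
      then show "(\<lambda>k. a / (real k * real M)) \<longlonglongrightarrow> 0" by (simp add: field_simps)
    qed
    have "Pr + ln (1 + \<eta>) / real M + 0 \<le> Pr"
      by (rule LIMSEQ_le[OF lim2 lim1]) (use lower in \<open>auto intro!: exI[of _ 1]\<close>)
    moreover have "ln (1 + \<eta>) / real M > 0" using eta0 M1 by simp
    ultimately show False by simp
  qed
  show "\<forall>\<rho>\<in>X. R (\<lambda>\<tau>. cmod (\<phi> \<tau>)) \<rho> = lam * cmod (\<phi> \<rho>)" using eqR by (simp add: v_def)
  have Rm: "\<forall>\<rho>\<in>X. (R ^^ m) v \<rho> = lam ^ m * v \<rho>" for m by (rule Rn_eig[OF bv eqR])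
  obtain N1 where N1: "N1 \<ge> 1" and N1c: "\<forall>\<tau>\<in>X. (\<forall>i<N1. \<tau> i = \<rho>1 i) \<longrightarrow> v \<rho>1 / 2 \<le> v \<tau>"
    using cont_point[of v Cv \<rho>1, OF Cv r1 v1] by blast
  obtain c where c0: "c > 0" and cH: "\<forall>\<tau>\<in>X. \<exists>m\<le>N1 + Lsum. c \<le> (R ^^ m) v \<tau>"
    using harnack[of v \<rho>1 N1 "v \<rho>1 / 2", OF vnn bv r1 N1 _ N1c] v1 by auto
  have "c / L ^ (N1 + Lsum) \<le> v \<tau>" if t: "\<tau> \<in> X" for \<tau>
  proof -
    obtain m where m: "m \<le> N1 + Lsum" and cm: "c \<le> (R ^^ m) v \<tau>" using cH t by blast
    have "c \<le> lam ^ m * v \<tau>" using cm Rm t by simp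
    also have "\<dots> \<le> L ^ (N1 + Lsum) * v \<tau>" using lamL[OF m] vnn t by (intro mult_right_mono) auto
    finally show ?thesis using L1 by (simp add: field_simps)
  qed
  moreover have "c / L ^ (N1 + Lsum) > 0" using c0 L1 by simp
  ultimately show "\<exists>\<delta>>0. \<forall>\<rho>\<in>X. \<delta> \<le> cmod (\<phi> \<rho>)" unfolding v_def by blast
qed

end


lemma tri_eq:
  fixes z :: "'a \<Rightarrow> complex"
  assumes sn: "(\<lambda>e. norm (z e)) summable_on S"
    and eq: "norm (infsum z S) = infsum (\<lambda>e. norm (z e)) S" and e: "e \<in> S"
  shows "z e * cnj (infsum z S) = complex_of_real (norm (z e) * norm (infsum z S))"
proof -
  have sz: "z summable_on S" by (rule abs_summable_summable[OF sn])
  define T where "T = infsum z S"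
  define w where "w e = norm (z e) * norm T - Re (z e * cnj T)" for e
  have wnn: "0 \<le> w e" for e
  proof -
    have "Re (z e * cnj T) \<le> cmod (z e * cnj T)" by (rule complex_Re_le_cmod)
    also have "\<dots> = norm (z e) * norm T" by (simp add: norm_mult)
    finally show ?thesis unfolding w_def by simp
  qed
  have szc: "(\<lambda>e. z e * cnj T) summable_on S" by (rule summable_on_cmult_left[OF sz])
  have sRe: "(\<lambda>e. Re (z e * cnj T)) summable_on S" by (rule summable_on_Re[OF szc])
  have sN: "(\<lambda>e. norm (z e) * norm T) summable_on S" by (rule summable_on_cmult_left[OF sn])
  have i1: "infsum (\<lambda>e. Re (z e * cnj T)) S = norm T * norm T"
  proof -
    have "infsum (\<lambda>e. Re (z e * cnj T)) S = Re (infsum (\<lambda>e. z e * cnj T) S)" by (rule infsum_Re[OF szc])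
    also have "infsum (\<lambda>e. z e * cnj T) S = T * cnj T" unfolding T_def by (rule infsum_cmult_left') 
    also have "Re (T * cnj T) = norm T * norm T"
      by (simp add: complex_mult_cnj cmod_def power2_eq_square[symmetric])
    finally show ?thesis .
  qed
  have i2: "infsum (\<lambda>e. norm (z e) * norm T) S = norm T * norm T"
    using eq unfolding T_def by (simp add: infsum_cmult_left')
  have sw: "w summable_on S" unfolding w_def diff_conv_add_uminus
    by (rule summable_on_add[OF sN]) (rule summable_on_uminus[THEN iffD2, OF sRe])
  have "infsum w S = 0"
    unfolding w_def using infsum_diff_banach[OF sN sRe] i1 i2 by simp
  then have w0: "w e = 0" using nonneg_infsum_le_0D[OF _ sw _ e] wnn by auto
  define u where "u = z e * cnj T"
  have ru: "Re u = cmod u" using w0 unfolding w_def u_def by (simp add: norm_mult)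
  have "Im u = 0"
  proof -
    have "(cmod u)\<^sup>2 = (Re u)\<^sup>2 + (Im u)\<^sup>2" by (simp add: cmod_power2)
    then show ?thesis using ru by simp
  qed
  then have "u = complex_of_real (cmod u)" using ru by (simp add: complex_eq_iff)
  then show ?thesis unfolding u_def T_def by (simp add: norm_mult)
qed

context tsetup
begin

definition "sC = Complex x y"
lemma Re_sC: "Re sC = x" by (simp add: sC_def)

abbreviation "T \<equiv> transfer_op A f sC"

definition "bph \<tau> = exp (sC * complex_of_real (f \<tau>)) / complex_of_real (exp (g \<tau>))"
definition "thph \<phi> \<tau> = \<phi> \<tau> / complex_of_real (cmod (\<phi> \<tau>))"

lemma phase:
  assumes phiV: "\<phi> \<in> V" and nz: "\<exists>\<rho>\<in>X. \<phi> \<rho> \<noteq> 0"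
    and eig: "\<forall>\<rho>\<in>X. T \<phi> \<rho> = \<mu> * \<phi> \<rho>" and mu: "cmod \<mu> = lam"
    and r: "\<rho> \<in> X" and e: "A e (\<rho> 0)"
  shows "bph (seq_cons e \<rho>) * thph \<phi> (seq_cons e \<rho>) = (\<mu> / complex_of_real lam) * thph \<phi> \<rho>"
proof -
  note per = peripheral[OF Re_sC phiV nz eig mu]
  obtain \<delta> where d0: "\<delta> > 0" and dl: "\<forall>\<rho>\<in>X. \<delta> \<le> cmod (\<phi> \<rho>)" using per(2) by blast
  obtain Bv where Bv: "\<forall>\<tau>\<in>X. norm (\<phi> \<tau>) \<le> Bv" using V_bound[OF phiV] by blast
  have bv: "bX (\<lambda>\<tau>. cmod (\<phi> \<tau>))" unfolding bX_def using Bv by auto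
  define z where "z e = exp (sC * complex_of_real (f (seq_cons e \<rho>))) * \<phi> (seq_cons e \<rho>)" for e
  have nze: "norm (z e) = exp (g (seq_cons e \<rho>)) * cmod (\<phi> (seq_cons e \<rho>))" for e
    unfolding z_def norm_mult norm_exp_s[OF Re_sC] by (rule refl)
  have sn: "(\<lambda>e. norm (z e)) summable_on {e. A e (\<rho> 0)}"
    unfolding nze by (rule R_summ[OF r bv])
  have Tz: "T \<phi> \<rho> = infsum z {e. A e (\<rho> 0)}" unfolding transfer_op_def z_def using r by simp
  have Rz: "R (\<lambda>\<tau>. cmod (\<phi> \<tau>)) \<rho> = infsum (\<lambda>e. norm (z e)) {e. A e (\<rho> 0)}"
    unfolding R_def nze ..
  define S where "S = \<mu> * \<phi> \<rho>"
  have TS: "infsum z {e. A e (\<rho> 0)} = S" using Tz eig r unfolding S_def by simp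
  have nS: "norm S = lam * cmod (\<phi> \<rho>)" unfolding S_def using mu by (simp add: norm_mult)
  have eqn: "norm (infsum z {e. A e (\<rho> 0)}) = infsum (\<lambda>e. norm (z e)) {e. A e (\<rho> 0)}"
    using TS nS Rz per(1) r by simp
  have key: "z e * cnj S = complex_of_real (norm (z e) * norm S)"
    using tri_eq[OF sn eqn, of e] e TS by simp
  have Spos: "norm S > 0" using nS lam_pos dl r d0 by (smt (verit) mult_pos_pos)
  have zpos: "norm (z e) > 0"
  proof -
    have "seq_cons e \<rho> \<in> X" using r e seq_cons_X by blast
    then have "cmod (\<phi> (seq_cons e \<rho>)) \<ge> \<delta>" using dl by blast
    then show ?thesis unfolding nze using d0 by (intro mult_pos_pos) auto
  qed
  have Sne: "S \<noteq> 0" using Spos by auto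
  have z_eq: "z e = complex_of_real (norm (z e)) * S / complex_of_real (norm S)"
  proof -
    define a where "a = complex_of_real (norm (z e))"
    define b where "b = complex_of_real (norm S)"
    have b0: "b \<noteq> 0" unfolding b_def using Spos by simp
    have cS: "cnj S * S = b * b"
      unfolding b_def by (simp add: complex_norm_square[symmetric] power2_eq_square mult.commute)
    have k2: "z e * cnj S = a * b" using key unfolding a_def b_def by simp
    have "z e * b * b = z e * (cnj S * S)" by (simp add: cS mult.assoc)
    also have "\<dots> = (z e * cnj S) * S" by (simp add: mult.assoc)
    also have "\<dots> = a * b * S" unfolding k2 ..
    also have "\<dots> = a * S * b" by (simp only: mult.assoc mult.commute[of b S])
    finally have "z e * b * b = a * S * b" .
    then have "z e * b = a * S" using b0 by simp
    then have "z e = a * S / b" using b0 by (simp add: field_simps)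
    then show ?thesis unfolding a_def b_def .
  qed
  have phe: "\<phi> (seq_cons e \<rho>) \<noteq> 0" using zpos unfolding z_def by auto
  have phr: "\<phi> \<rho> \<noteq> 0" using Sne unfolding S_def by auto
  have lhs: "bph (seq_cons e \<rho>) * thph \<phi> (seq_cons e \<rho>) = z e / complex_of_real (norm (z e))"
    unfolding nze unfolding z_def bph_def thph_def using phe by (simp add: field_simps)
  have rhs: "(\<mu> / complex_of_real lam) * thph \<phi> \<rho> = S / complex_of_real (norm S)"
    unfolding nS unfolding thph_def S_def using lam_pos phr by (simp add: field_simps)
  show ?thesis unfolding lhs rhs using zpos Spos
    by (subst z_eq) (simp add: field_simps)
qed

lemma pip_step:
  "(shift ^^ j) pip = seq_cons (pip j) ((shift ^^ Suc j) pip)"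
  "A (pip j) (((shift ^^ Suc j) pip) 0)"
  "(shift ^^ j) pip \<in> X"
proof -
  show "(shift ^^ j) pip = seq_cons (pip j) ((shift ^^ Suc j) pip)"
    unfolding shift_funpow by (rule ext) (simp add: seq_cons_def split: nat.split)
  show "A (pip j) (((shift ^^ Suc j) pip) 0)"
    using pip_X unfolding admissible_seqs_def shift_funpow by simp
  show "(shift ^^ j) pip \<in> X" by (rule shift_adm[OF pip_X])
qed

lemma eig_root:
  assumes phiV: "\<phi> \<in> V" and nz: "\<exists>\<rho>\<in>X. \<phi> \<rho> \<noteq> 0"
    and eig: "\<forall>\<rho>\<in>X. T \<phi> \<rho> = \<mu> * \<phi> \<rho>" and mu: "cmod \<mu> = lam"
  shows "(\<mu> / complex_of_real lam) ^ per = (\<Prod>j<per. bph ((shift ^^ j) pip))"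
proof -
  define \<gamma> where "\<gamma> = \<mu> / complex_of_real lam"
  have claim: "(\<Prod>j<k. bph ((shift ^^ j) pip)) * thph \<phi> pip = \<gamma> ^ k * thph \<phi> ((shift ^^ k) pip)" for k
  proof (induction k)
    case 0 then show ?case by simp
  next
    case (Suc k)
    have rel: "bph ((shift ^^ k) pip) * thph \<phi> ((shift ^^ k) pip) = \<gamma> * thph \<phi> ((shift ^^ Suc k) pip)"
      using phase[OF phiV nz eig mu pip_step(3)[of "Suc k"] pip_step(2)[of k], unfolded pip_step(1)[of k, symmetric]]
      unfolding \<gamma>_def .
    have "(\<Prod>j<Suc k. bph ((shift ^^ j) pip)) * thph \<phi> pip
        = bph ((shift ^^ k) pip) * ((\<Prod>j<k. bph ((shift ^^ j) pip)) * thph \<phi> pip)"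
      by (simp add: ac_simps)
    also have "\<dots> = \<gamma> ^ k * (bph ((shift ^^ k) pip) * thph \<phi> ((shift ^^ k) pip))"
      unfolding Suc by (simp add: ac_simps)
    also have "\<dots> = \<gamma> ^ Suc k * thph \<phi> ((shift ^^ Suc k) pip)" unfolding rel by (simp add: ac_simps)
    finally show ?case .
  qed
  obtain \<delta> where d0: "\<delta> > 0" and dl: "\<forall>\<rho>\<in>X. \<delta> \<le> cmod (\<phi> \<rho>)"
    using peripheral(2)[OF Re_sC phiV nz eig mu] by blast
  have "thph \<phi> pip \<noteq> 0"
  proof -
    have "cmod (\<phi> pip) \<ge> \<delta>" using dl pip_X by blast
    then show ?thesis using d0 unfolding thph_def by auto
  qed
  then show ?thesis using claim[of per] unfolding shift_per \<gamma>_def by simp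
qed

end


context tsetup
begin

lemma V_nz: "\<phi> \<in> V \<Longrightarrow> \<phi> \<noteq> (\<lambda>_. 0) \<Longrightarrow> \<exists>\<rho>\<in>X. \<phi> \<rho> \<noteq> 0"
  using V_zero by fastforce

lemma eig_unique:
  assumes p1: "\<phi>1 \<in> V" and p2: "\<phi>2 \<in> V" and nz: "\<exists>\<rho>\<in>X. \<phi>1 \<rho> \<noteq> 0"
    and e1: "\<forall>\<rho>\<in>X. T \<phi>1 \<rho> = \<mu> * \<phi>1 \<rho>" and e2: "\<forall>\<rho>\<in>X. T \<phi>2 \<rho> = \<mu> * \<phi>2 \<rho>"
    and mu: "cmod \<mu> = lam"
  shows "\<exists>c. \<phi>2 = (\<lambda>\<rho>. c * \<phi>1 \<rho>)"
proof -
  obtain \<delta> where d0: "\<delta> > 0" and dl: "\<forall>\<rho>\<in>X. \<delta> \<le> cmod (\<phi>1 \<rho>)"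
    using peripheral(2)[OF Re_sC p1 nz e1 mu] by blast
  have p0: "\<phi>1 pip \<noteq> 0" using dl pip_X d0 by force
  define c where "c = \<phi>2 pip / \<phi>1 pip"
  define \<psi> where "\<psi> = (\<lambda>\<tau>. 1 * \<phi>2 \<tau> + (- c) * \<phi>1 \<tau>)"
  have psiV: "\<psi> \<in> V" unfolding \<psi>_def by (rule V_lin[OF p2 p1])
  obtain B1 where B1: "\<forall>\<tau>\<in>X. norm (\<phi>1 \<tau>) \<le> B1" using V_bound[OF p1] by blast
  obtain B2 where B2: "\<forall>\<tau>\<in>X. norm (\<phi>2 \<tau>) \<le> B2" using V_bound[OF p2] by blast
  have epsi: "\<forall>\<rho>\<in>X. T \<psi> \<rho> = \<mu> * \<psi> \<rho>"
  proof
    fix \<rho> assume r: "\<rho> \<in> X"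
    have "T \<psi> \<rho> = 1 * T \<phi>2 \<rho> + (- c) * T \<phi>1 \<rho>" unfolding \<psi>_def by (rule T_lin[OF Re_sC B2 B1])
    also have "\<dots> = \<mu> * \<psi> \<rho>" using e1 e2 r unfolding \<psi>_def by (simp add: algebra_simps)
    finally show "T \<psi> \<rho> = \<mu> * \<psi> \<rho>" .
  qed
  have psi0: "\<psi> pip = 0" unfolding \<psi>_def c_def using p0 by simp
  have "\<forall>\<rho>\<in>X. \<psi> \<rho> = 0"
  proof (rule ccontr)
    assume "\<not> (\<forall>\<rho>\<in>X. \<psi> \<rho> = 0)"
    then have nzp: "\<exists>\<rho>\<in>X. \<psi> \<rho> \<noteq> 0" by blast
    obtain \<delta>' where d0': "\<delta>' > 0" and dl': "\<forall>\<rho>\<in>X. \<delta>' \<le> cmod (\<psi> \<rho>)"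
      using peripheral(2)[OF Re_sC psiV nzp epsi mu] by blast
    then show False using psi0 pip_X by force
  qed
  then have "\<psi> \<rho> = 0" for \<rho> using V_zero[OF psiV] by (cases "\<rho> \<in> X") auto
  then have "\<phi>2 \<rho> = c * \<phi>1 \<rho>" for \<rho> unfolding \<psi>_def by (simp add: algebra_simps)
  then show ?thesis by blast
qed

abbreviation "Nop \<mu> \<equiv> op_minus_scalar A T \<mu>"

lemma Nop_eq: "G \<in> V \<Longrightarrow> Nop \<mu> G = (\<lambda>\<rho>. 1 * T G \<rho> + (- \<mu>) * G \<rho>)"
  by (rule ext) (auto simp: op_minus_scalar_def T_out V_zero)

lemma Nop_V: "G \<in> V \<Longrightarrow> Nop \<mu> G \<in> V"
  unfolding Nop_eq by (rule V_lin[OF T_in_V[OF Re_sC]])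

lemma Tpow_V: "G \<in> V \<Longrightarrow> (T ^^ n) G \<in> V"
  by (induction n) (auto intro: T_in_V[OF Re_sC])

lemma jordan:
  assumes G: "G \<in> V" and N2: "Nop \<mu> (Nop \<mu> G) = (\<lambda>_. 0)" and mu: "cmod \<mu> = lam"
  shows "Nop \<mu> G = (\<lambda>_. 0)"
proof (rule ccontr)
  assume ne: "Nop \<mu> G \<noteq> (\<lambda>_. 0)"
  define \<phi> where "\<phi> = Nop \<mu> G"
  have phiV: "\<phi> \<in> V" unfolding \<phi>_def by (rule Nop_V[OF G])
  have nz: "\<exists>\<rho>\<in>X. \<phi> \<rho> \<noteq> 0" using V_nz[OF phiV] ne unfolding \<phi>_def by blast
  have eig: "\<forall>\<rho>\<in>X. T \<phi> \<rho> = \<mu> * \<phi> \<rho>"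
  proof
    fix \<rho> assume r: "\<rho> \<in> X"
    have "op_minus_scalar A T \<mu> \<phi> \<rho> = 0" using N2 unfolding \<phi>_def by simp
    then show "T \<phi> \<rho> = \<mu> * \<phi> \<rho>" using r unfolding op_minus_scalar_def by simp
  qed
  have TG: "\<forall>\<rho>\<in>X. T G \<rho> = \<mu> * G \<rho> + \<phi> \<rho>"
    unfolding \<phi>_def op_minus_scalar_def by simp
  note per = peripheral[OF Re_sC phiV nz eig mu]
  obtain \<delta> where d0: "\<delta> > 0" and dl: "\<forall>\<rho>\<in>X. \<delta> \<le> cmod (\<phi> \<rho>)" using per(2) by blast
  obtain BG where BG: "\<forall>\<tau>\<in>X. norm (G \<tau>) \<le> BG" using V_bound[OF G] by blast
  obtain Bp where Bp: "\<forall>\<tau>\<in>X. norm (\<phi> \<tau>) \<le> Bp" using V_bound[OF phiV] by blast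
  have BG0: "0 \<le> BG" using BG pip_X by (meson norm_ge_zero order_trans)
  have formula: "\<forall>\<rho>\<in>X. (T ^^ n) G \<rho> = \<mu> ^ n * G \<rho> + of_nat n * \<mu> ^ (n - 1) * \<phi> \<rho>" for n
  proof (induction n)
    case 0 then show ?case by simp
  next
    case (Suc n)
    show ?case
    proof
      fix \<rho> assume r: "\<rho> \<in> X"
      have "(T ^^ Suc n) G \<rho> = T ((T ^^ n) G) \<rho>" by simp
      also have "\<dots> = T (\<lambda>\<tau>. \<mu> ^ n * G \<tau> + (of_nat n * \<mu> ^ (n - 1)) * \<phi> \<tau>) \<rho>"
        by (rule T_cong) (use Suc in \<open>simp add: mult.assoc\<close>)
      also have "\<dots> = \<mu> ^ n * T G \<rho> + (of_nat n * \<mu> ^ (n - 1)) * T \<phi> \<rho>"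
        by (rule T_lin[OF Re_sC BG Bp])
      also have "\<dots> = \<mu> ^ Suc n * G \<rho> + (\<mu> ^ n + of_nat n * \<mu> ^ (n - 1) * \<mu>) * \<phi> \<rho>"
        using TG eig r by (simp add: algebra_simps)
      also have "\<mu> ^ n + of_nat n * \<mu> ^ (n - 1) * \<mu> = of_nat (Suc n) * \<mu> ^ (Suc n - 1)"
        by (cases n) (simp_all add: algebra_simps)
      finally show "(T ^^ Suc n) G \<rho> = \<mu> ^ Suc n * G \<rho> + of_nat (Suc n) * \<mu> ^ (Suc n - 1) * \<phi> \<rho>" .
    qed
  qed
  have bG: "bX (\<lambda>\<tau>. cmod (G \<tau>))" unfolding bX_def using BG by auto
  have bound: "\<forall>\<rho>\<in>X. cmod ((T ^^ n) G \<rho>) \<le> (R ^^ n) (\<lambda>\<tau>. cmod (G \<tau>)) \<rho>" for n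
  proof (induction n)
    case 0 then show ?case by simp
  next
    case (Suc n)
    show ?case
    proof
      fix \<rho> assume r: "\<rho> \<in> X"
      obtain Bn where Bn: "\<forall>\<tau>\<in>X. norm ((T ^^ n) G \<tau>) \<le> Bn" using V_bound[OF Tpow_V[OF G]] by blast
      have bn: "bX (\<lambda>\<tau>. cmod ((T ^^ n) G \<tau>))" unfolding bX_def using Bn by auto
      have "cmod ((T ^^ Suc n) G \<rho>) \<le> R (\<lambda>\<tau>. cmod ((T ^^ n) G \<tau>)) \<rho>"
        using T_basic(2)[OF Re_sC r Bn] by simp
      also have "\<dots> \<le> R ((R ^^ n) (\<lambda>\<tau>. cmod (G \<tau>))) \<rho>"
        by (rule R_mono[OF r bn Rn_bX[OF bG]]) (use Suc in blast)
      finally show "cmod ((T ^^ Suc n) G \<rho>) \<le> (R ^^ Suc n) (\<lambda>\<tau>. cmod (G \<tau>)) \<rho>" by simp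
    qed
  qed
  have bp: "bX (\<lambda>\<tau>. cmod (\<phi> \<tau>))" unfolding bX_def using Bp by auto
  have Rp: "\<forall>\<rho>\<in>X. (R ^^ n) (\<lambda>\<tau>. cmod (\<phi> \<tau>)) \<rho> = lam ^ n * cmod (\<phi> \<rho>)" for n
    by (rule Rn_eig[OF bp per(1)])
  have RG: "(R ^^ n) (\<lambda>\<tau>. cmod (G \<tau>)) \<rho> \<le> BG / \<delta> * (lam ^ n * Bp)" if r: "\<rho> \<in> X" for n \<rho>
  proof -
    have le: "\<forall>\<tau>\<in>X. cmod (G \<tau>) \<le> BG / \<delta> * cmod (\<phi> \<tau>)"
    proof
      fix \<tau> assume t: "\<tau> \<in> X"
      have "cmod (G \<tau>) \<le> BG" using BG t by blast
      also have "\<dots> \<le> BG / \<delta> * cmod (\<phi> \<tau>)"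
        using dl t d0 BG0 by (simp add: field_simps mult_left_mono)
      finally show "cmod (G \<tau>) \<le> BG / \<delta> * cmod (\<phi> \<tau>)" .
    qed
    have b2: "bX (\<lambda>\<tau>. BG / \<delta> * cmod (\<phi> \<tau>))" using bp unfolding bX_def
      by (metis abs_mult mult_left_mono abs_ge_zero)
    have "(R ^^ n) (\<lambda>\<tau>. cmod (G \<tau>)) \<rho> \<le> (R ^^ n) (\<lambda>\<tau>. BG / \<delta> * cmod (\<phi> \<tau>)) \<rho>"
      using Rn_mono[OF bG b2 le] r by blast
    also have "\<dots> = BG / \<delta> * (R ^^ n) (\<lambda>\<tau>. cmod (\<phi> \<tau>)) \<rho>"
      by (rule fun_cong[OF Rn_cmult])
    also have "\<dots> = BG / \<delta> * (lam ^ n * cmod (\<phi> \<rho>))" using Rp r by simp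
    also have "\<dots> \<le> BG / \<delta> * (lam ^ n * Bp)"
      using Bp r BG0 d0 lam_pos by (intro mult_left_mono) auto
    finally show ?thesis .
  qed
  define K where "K = lam * (BG / \<delta> * Bp + BG)"
  have nb: "real (Suc m) * \<delta> \<le> K" for m
  proof -
    have r: "pip \<in> X" by (rule pip_X)
    have "of_nat (Suc m) * \<mu> ^ m * \<phi> pip = (T ^^ Suc m) G pip - \<mu> ^ Suc m * G pip"
      using formula[of "Suc m"] r by simp
    then have "real (Suc m) * lam ^ m * cmod (\<phi> pip) = cmod ((T ^^ Suc m) G pip - \<mu> ^ Suc m * G pip)"
      by (metis mu norm_mult norm_of_nat norm_power)
    also have "\<dots> \<le> cmod ((T ^^ Suc m) G pip) + cmod (\<mu> ^ Suc m * G pip)" by (rule norm_triangle_ineq4)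
    also have "\<dots> \<le> BG / \<delta> * (lam ^ Suc m * Bp) + lam ^ Suc m * BG"
    proof (rule add_mono)
      show "cmod ((T ^^ Suc m) G pip) \<le> BG / \<delta> * (lam ^ Suc m * Bp)"
        using bound[of "Suc m"] RG[OF r, of "Suc m"] r by (meson order_trans)
      show "cmod (\<mu> ^ Suc m * G pip) \<le> lam ^ Suc m * BG"
        using BG r lam_pos by (simp add: norm_mult norm_power mu mult_left_mono)
    qed
    also have "\<dots> = lam ^ m * K" unfolding K_def by (simp add: algebra_simps)
    finally have a: "real (Suc m) * lam ^ m * cmod (\<phi> pip) \<le> lam ^ m * K" .
    have "real (Suc m) * cmod (\<phi> pip) \<le> K"
      using a lam_pos by (simp add: mult.assoc mult.left_commute[of "real (Suc m)"])
    moreover have "real (Suc m) * \<delta> \<le> real (Suc m) * cmod (\<phi> pip)"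
      using dl r by (intro mult_left_mono) auto
    ultimately show ?thesis by linarith
  qed
  obtain m where "K / \<delta> < real m" using reals_Archimedean2 by blast
  then have "K < real (Suc m) * \<delta>" using d0 by (simp add: field_simps)
  then show False using nb[of m] by simp
qed

lemma gen_zero:
  assumes "cmod \<mu> = lam"
  shows "G \<in> V \<Longrightarrow> (Nop \<mu> ^^ k) G = (\<lambda>_. 0) \<Longrightarrow> G = (\<lambda>_. 0) \<or> Nop \<mu> G = (\<lambda>_. 0)"
proof (induction k arbitrary: G)
  case 0 then show ?case by simp
next
  case (Suc k)
  have "(Nop \<mu> ^^ k) (Nop \<mu> G) = (\<lambda>_. 0)" using Suc.prems(2) by (simp add: funpow_Suc_right del: funpow.simps)
  then have "Nop \<mu> G = (\<lambda>_. 0) \<or> Nop \<mu> (Nop \<mu> G) = (\<lambda>_. 0)" using Suc.IH Nop_V[OF Suc.prems(1)] by blast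
  then show ?case using jordan[OF Suc.prems(1) _ assms] by blast
qed

lemma main_finite:
  "finite {\<mu>. cmod \<mu> = lam \<and> is_eigenvalue_on V A T \<mu>}"
proof -
  define c where "c = (\<Prod>j<per. bph ((shift ^^ j) pip))"
  have "{\<mu>. cmod \<mu> = lam \<and> is_eigenvalue_on V A T \<mu>} \<subseteq> (\<lambda>\<gamma>. complex_of_real lam * \<gamma>) ` {\<gamma>. \<gamma> ^ per = c}"
  proof
    fix \<mu> assume "\<mu> \<in> {\<mu>. cmod \<mu> = lam \<and> is_eigenvalue_on V A T \<mu>}"
    then have mu: "cmod \<mu> = lam" and ev: "is_eigenvalue_on V A T \<mu>" by auto
    obtain \<phi> where phiV: "\<phi> \<in> V" and ne: "\<phi> \<noteq> (\<lambda>_. 0)" and N0: "op_minus_scalar A T \<mu> \<phi> = (\<lambda>_. 0)"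
      using ev unfolding is_eigenvalue_on_def by blast
    have eig: "\<forall>\<rho>\<in>X. T \<phi> \<rho> = \<mu> * \<phi> \<rho>"
    proof
      fix \<rho> assume r: "\<rho> \<in> X"
      have "op_minus_scalar A T \<mu> \<phi> \<rho> = 0" using N0 by simp
      then show "T \<phi> \<rho> = \<mu> * \<phi> \<rho>" using r unfolding op_minus_scalar_def by simp
    qed
    have "(\<mu> / complex_of_real lam) ^ per = c"
      unfolding c_def by (rule eig_root[OF phiV V_nz[OF phiV ne] eig mu])
    moreover have "\<mu> = complex_of_real lam * (\<mu> / complex_of_real lam)" using lam_pos by simp
    ultimately show "\<mu> \<in> (\<lambda>\<gamma>. complex_of_real lam * \<gamma>) ` {\<gamma>. \<gamma> ^ per = c}" by blast
  qed
  moreover have "finite ((\<lambda>\<gamma>. complex_of_real lam * \<gamma>) ` {\<gamma>. \<gamma> ^ per = c})"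
    using finite_nth_roots[OF per_pos] by blast
  ultimately show ?thesis by (rule finite_subset)
qed

lemma main_mult:
  assumes mu: "cmod \<mu> = lam" and ev: "is_eigenvalue_on V A T \<mu>"
  shows "alg_mult_one V A T \<mu>"
proof -
  obtain \<phi> where phiV: "\<phi> \<in> V" and ne: "\<phi> \<noteq> (\<lambda>_. 0)" and N0: "op_minus_scalar A T \<mu> \<phi> = (\<lambda>_. 0)"
    using ev unfolding is_eigenvalue_on_def by blast
  have eigf: "\<forall>\<rho>\<in>X. T G \<rho> = \<mu> * G \<rho>" if "op_minus_scalar A T \<mu> G = (\<lambda>_. 0)" for G
  proof
    fix \<rho> assume r: "\<rho> \<in> X"
    have "op_minus_scalar A T \<mu> G \<rho> = 0" using that by simp
    then show "T G \<rho> = \<mu> * G \<rho>" using r unfolding op_minus_scalar_def by simp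
  qed
  have inG: "\<phi> \<in> gen_eigenspace V A T \<mu>"
    unfolding gen_eigenspace_def using phiV N0 by (auto intro!: exI[of _ 1])
  have all: "\<exists>c. G = (\<lambda>\<rho>. c * \<phi> \<rho>)" if "G \<in> gen_eigenspace V A T \<mu>" for G
  proof -
    from that obtain k where GV: "G \<in> V" and Gk: "(Nop \<mu> ^^ k) G = (\<lambda>_. 0)"
      unfolding gen_eigenspace_def by blast
    from gen_zero[OF mu GV Gk] show ?thesis
    proof
      assume "G = (\<lambda>_. 0)"
      then show ?thesis by (intro exI[of _ 0]) simp
    next
      assume "Nop \<mu> G = (\<lambda>_. 0)"
      then show ?thesis
        using eig_unique[OF phiV GV V_nz[OF phiV ne] eigf[OF N0] eigf mu] by blast
    qed
  qed
  show ?thesis unfolding alg_mult_one_def using inG ne all by blast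
qed

end


theorem mainTheorem4:
  fixes A :: "'e::countable \<Rightarrow> 'e \<Rightarrow> bool"
    and f :: "(nat \<Rightarrow> 'e) \<Rightarrow> real"
    and \<alpha> x y :: real
  assumes irr: "finitely_irreducible A"
    and alpha_pos: "\<alpha> > 0"
    and summ: "summable_pot A f"
    and sreg: "strongly_regular A f"
    and hold: "holder_type A \<alpha> f"
    and P0: "pressure A f = 0"
    and x_Gamma: "x \<in> Gamma_set A f"
  shows "finite {\<mu>. cmod \<mu> = exp (real_of_ereal (pressure A (\<lambda>\<rho>. x * f \<rho>))) \<and>
                    is_eigenvalue_on (holder_space A \<alpha>) A (transfer_op A f (Complex x y)) \<mu>}
       \<and> (\<forall>\<mu>. cmod \<mu> = exp (real_of_ereal (pressure A (\<lambda>\<rho>. x * f \<rho>))) \<and>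
               is_eigenvalue_on (holder_space A \<alpha>) A (transfer_op A f (Complex x y)) \<mu>
             \<longrightarrow> alg_mult_one (holder_space A \<alpha>) A (transfer_op A f (Complex x y)) \<mu>)"
proof -
  obtain C where C: "\<forall>n\<ge>1. \<forall>\<rho>\<in>admissible_seqs A. \<forall>\<rho>'\<in>admissible_seqs A.
        (\<forall>i<n. \<rho> i = \<rho>' i) \<longrightarrow> norm (f \<rho> - f \<rho>') * exp (\<alpha> * (real n - 1)) \<le> C"
    using hold unfolding holder_type_def by blast
  have sx: "summable_pot A (\<lambda>\<rho>. x * f \<rho>)" using x_Gamma unfolding Gamma_set_def by simp
  interpret tsetup A f \<alpha> x y "max C 0"
  proof
    show "finitely_irreducible A" by (rule irr)
    show "\<alpha> > 0" by (rule alpha_pos)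
    show "0 \<le> max C 0" by simp
    show "summable_pot A (\<lambda>\<rho>. x * f \<rho>)" by (rule sx)
    fix n \<rho> \<rho>' assume h: "1 \<le> n" "\<rho> \<in> admissible_seqs A" "\<rho>' \<in> admissible_seqs A" "\<forall>i<n. \<rho> i = \<rho>' i"
    have "norm (f \<rho> - f \<rho>') * exp (\<alpha> * (real n - 1)) \<le> C" using C h by blast
    then show "\<bar>f \<rho> - f \<rho>'\<bar> * exp (\<alpha> * (real n - 1)) \<le> max C 0" by simp
  qed
  have P: "exp (real_of_ereal (pressure A (\<lambda>\<rho>. x * f \<rho>))) = lam" by (simp add: pressure_eq lam_def)
  have TT: "transfer_op A f (Complex x y) = T" by (simp add: sC_def)
  show ?thesis unfolding P TT using main_finite main_mult by blast
qed

end
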